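(* Let $\varphi=\frac{1+\sqrt5}{2}$ and $\theta_0=\left(\frac12,\frac1\varphi,\frac1{\varphi^2}\right)$. For almost every point $m=(0,y,z)$ (with respect to Lebesgue measure on the face $X=0$ of the cube $[0,1]^3$), the circle $C_m=\{(y+t,\,z-t)\bmod 1: t\in\mathbb R\}$, parametrized by its first coordinate and thus identified with $[0,1)$, is cut by the sets $P_{a_1},\dots,P_{a_7}$ into a partition of $[0,1]$ into $6$ intervals $I_1,\dots,I_6$, each contained in a single $P_{a_i}$; and, letting $g$ be the coding of the translation $R:s\mapsto s+\frac{2}{\varphi}\bmod 1$ with respect to this partition (i.e. $g(s)_n=a_i$ iff $R^n(s)\in I_j$ with $I_j\subset P_{a_i}$), one has $$f_{\theta_0}(m)=\Phi(v),\qquad v=g(y(m)),$$ where $y(m)=y$ is the second coordinate of $m$ and $\Phi$ is extended to infinite words by concatenation.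
   Context: Billiard words: for $\theta\in\mathbb R_+^3\setminus\{0\}$ and $m\in\mathbb R^3$ such that the line $m+\mathbb R\theta$ contains no point with more than one integer coordinate, $f_\theta(m)\in\{a,b,c\}^{\mathbb N}$ is the infinite word recording, in order, the successive intersections of the half line $m+\mathbb R_+\theta$ with the planes $X=n$ (letter $a$), $Y=n$ (letter $b$), $Z=n$ (letter $c$), $n\in\mathbb Z$. For $m$ on the face $X=0$ this word begins with $a$. The face $X=0$ is identified with the torus $\mathbb T^2=(\mathbb R/\mathbb Z)^2$ via $(0,y,z)\mapsto(y,z)\bmod 1$. It is partitioned (up to boundaries) into seven sets, for $(y,z)\in[0,1)^2$: $P_{a_7}$: $y<4-2\varphi,\ z<2\varphi-3$; $P_{a_4}$: $y>4-2\varphi,\ z<2\varphi-3$; $P_{a_2}$: $y<4-2\varphi,\ 2\varphi-3<z<(2-\varphi)+y/\varphi$; $P_{a_1}$: $y<4-2\varphi,\ z>(2-\varphi)+y/\varphi$; $P_{a_5}$: $y>4-2\varphi,\ 2\varphi-3<z<(3-2\varphi)+y/\varphi$; $P_{a_3}$: $y>4-2\varphi,\ (3-2\varphi)+y/\varphi<z<(2-\varphi)+y/\varphi$; $P_{a_6}$: $y>4-2\varphi,\ z>(2-\varphi)+y/\varphi$. $\Phi$ is the morphism from $\{a_1,\dots,a_7\}^*$ to $\{a,b,c\}^*$ given by $\Phi(a_1)=acb$, $\Phi(a_2)=abc$, $\Phi(a_3)=abcb$, $\Phi(a_4)=abb$, $\Phi(a_5)=abbc$, $\Phi(a_6)=acbb$,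 $\Phi(a_7)=ab$. *)

theory Defs
  imports "HOL-Analysis.Analysis"
begin

definition phi :: real where "phi = (1 + sqrt 5) / 2"

datatype abc = a | b | c
datatype alph7 = a1 | a2 | a3 | a4 | a5 | a6 | a7

fun coord :: "abc \<Rightarrow> real \<times> real \<times> real \<Rightarrow> real" where
  "coord a (x, y, z) = x"
| "coord b (x, y, z) = y"
| "coord c (x, y, z) = z"

definition hit :: "real \<times> real \<times> real \<Rightarrow> real \<times> real \<times> real \<Rightarrow> abc \<Rightarrow> real \<Rightarrow> bool" where
  "hit \<theta> m l t \<longleftrightarrow> coord l m + t * coord l \<theta> \<in> \<int>"

definition admissible :: "real \<times> real \<times> real \<Rightarrow> real \<times> real \<times> real \<Rightarrow> bool" where
  "admissible \<theta> m \<longleftrightarrow> (\<forall>t::real. \<forall>l1 l2. l1 \<noteq> l2 \<longrightarrow> \<not> (hit \<theta> m l1 t \<and> hit \<theta> m l2 t))"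

text \<open>Billiard word: the n-th letter is the plane hit at the n-th intersection time
  (times t \<ge> 0, counted from 0) of the half line m + R_+ theta.\<close>
definition billiard :: "real \<times> real \<times> real \<Rightarrow> real \<times> real \<times> real \<Rightarrow> nat \<Rightarrow> abc" where
  "billiard \<theta> m n = (THE l. \<exists>t\<ge>0. hit \<theta> m l t \<and>
      card {s. 0 \<le> s \<and> s < t \<and> (\<exists>l'. hit \<theta> m l' s)} = n)"

definition P :: "alph7 \<Rightarrow> (real \<times> real) set" where
  "P i = {(y, z). 0 \<le> y \<and> y < 1 \<and> 0 \<le> z \<and> z < 1 \<and>
     (case i of
        a7 \<Rightarrow> y < 4 - 2*phi \<and> z < 2*phi - 3
      | a4 \<Rightarrow> y > 4 - 2*phi \<and> z < 2*phi - 3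
      | a2 \<Rightarrow> y < 4 - 2*phi \<and> 2*phi - 3 < z \<and> z < (2 - phi) + y / phi
      | a1 \<Rightarrow> y < 4 - 2*phi \<and> z > (2 - phi) + y / phi
      | a5 \<Rightarrow> y > 4 - 2*phi \<and> 2*phi - 3 < z \<and> z < (3 - 2*phi) + y / phi
      | a3 \<Rightarrow> y > 4 - 2*phi \<and> (3 - 2*phi) + y / phi < z \<and> z < (2 - phi) + y / phi
      | a6 \<Rightarrow> y > 4 - 2*phi \<and> z > (2 - phi) + y / phi)}"

text \<open>The point of the circle C_m (m = (0,y,z)) with first coordinate s:
  (y + t, z - t) mod 1 with s = y + t mod 1.\<close>
definition circ_pt :: "real \<Rightarrow> real \<Rightarrow> real \<Rightarrow> real \<times> real" where
  "circ_pt y z s = (frac s, frac (y + z - s))"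

definition rot :: "real \<Rightarrow> real" where
  "rot s = frac (s + 2 / phi)"

fun Phi :: "alph7 \<Rightarrow> abc list" where
  "Phi a1 = [a, c, b]"
| "Phi a2 = [a, b, c]"
| "Phi a3 = [a, b, c, b]"
| "Phi a4 = [a, b, b]"
| "Phi a5 = [a, b, b, c]"
| "Phi a6 = [a, c, b, b]"
| "Phi a7 = [a, b]"

text \<open>Phi extended to infinite words by concatenation (every Phi x is nonempty, so the
  first n+1 blocks contain at least n+1 letters).\<close>
definition Phi_inf :: "(nat \<Rightarrow> alph7) \<Rightarrow> nat \<Rightarrow> abc" where
  "Phi_inf v n = concat (map (Phi \<circ> v) [0..<Suc n]) ! n"

definition theta0 :: "real \<times> real \<times> real" where
  "theta0 = (1/2, 1/phi, 1/phi^2)"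

end

theory Submission
  imports Defs
begin


lemma phi_sq: "phi * phi = phi + 1"
proof -
  have "sqrt 5 * sqrt 5 = 5" by simp
  then show ?thesis unfolding phi_def by (simp add: field_simps)
qed

lemma phi_bounds: "1.6 < phi" "phi < 1.7"
proof -
  have "2.2 < sqrt 5" by (rule real_less_rsqrt) (simp add: power2_eq_square)
  moreover have "sqrt 5 < 2.4" by (rule real_less_lsqrt) (simp_all add: power2_eq_square)
  ultimately show "1.6 < phi" "phi < 1.7" unfolding phi_def by auto
qed

lemma phi_pos: "phi > 0" using phi_bounds by simp

lemma inv_phi: "1 / phi = phi - 1"
  using phi_sq phi_pos by (simp add: field_simps)

lemma inv_phi2: "1 / phi^2 = 2 - phi"
  using phi_sq phi_pos by (simp add: field_simps power2_eq_square)

definition Qp :: "real set" where "Qp = (\<lambda>(p,q). of_rat p + of_rat q * phi) ` (UNIV :: (rat \<times> rat) set)"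

lemma countable_Qp: "countable Qp" unfolding Qp_def by simp

lemma Qp_of_int: "of_int n \<in> Qp"
  unfolding Qp_def by (rule image_eqI[of _ _ "(of_int n, 0)"]) auto

lemma Qp_phi: "phi \<in> Qp"
  unfolding Qp_def by (rule image_eqI[of _ _ "(0, 1)"]) auto

lemma Qp_add: "x \<in> Qp \<Longrightarrow> y \<in> Qp \<Longrightarrow> x + y \<in> Qp"
  unfolding Qp_def
  apply clarify
  subgoal for p q p' q' by (rule image_eqI[of _ _ "(p+p', q+q')"]) (auto simp: of_rat_add algebra_simps)
  done

lemma Qp_uminus: "x \<in> Qp \<Longrightarrow> - x \<in> Qp"
  unfolding Qp_def
  apply clarify
  subgoal for p q by (rule image_eqI[of _ _ "(-p, -q)"]) (auto simp: of_rat_minus algebra_simps)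
  done

lemma Qp_diff: "x \<in> Qp \<Longrightarrow> y \<in> Qp \<Longrightarrow> x - y \<in> Qp"
  using Qp_add[of x "-y"] Qp_uminus by simp

lemma Qp_mult: "x \<in> Qp \<Longrightarrow> y \<in> Qp \<Longrightarrow> x * y \<in> Qp"
proof -
  assume "x \<in> Qp" "y \<in> Qp"
  then obtain p q p' q' where x: "x = of_rat p + of_rat q * phi" and y: "y = of_rat p' + of_rat q' * phi"
    unfolding Qp_def by auto
  have "x * y = of_rat p * of_rat p' + (of_rat p * of_rat q' + of_rat q * of_rat p') * phi + of_rat q * of_rat q' * (phi * phi)"
    unfolding x y by (simp add: algebra_simps)
  also have "\<dots> = of_rat (p*p' + q*q') + of_rat (p*q' + q*p' + q*q') * phi"
    unfolding phi_sq by (simp add: of_rat_add of_rat_mult algebra_simps)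
  finally show ?thesis unfolding Qp_def by (intro image_eqI[of _ _ "(p*p' + q*q', p*q' + q*p' + q*q')"]) auto
qed

lemma Qp_of_nat: "of_nat n \<in> Qp" using Qp_of_int[of "int n"] by simp
lemma Qp_numeral: "numeral n \<in> Qp" using Qp_of_int[of "numeral n"] by simp
lemma Qp_0: "0 \<in> Qp" using Qp_of_int[of 0] by simp
lemma Qp_1: "1 \<in> Qp" using Qp_of_int[of 1] by simp
lemma Qp_inv_phi: "1 / phi \<in> Qp" unfolding inv_phi by (intro Qp_diff Qp_phi Qp_1)

definition good :: "real \<Rightarrow> real \<Rightarrow> bool" where
  "good y z \<longleftrightarrow> (\<forall>a1\<in>Qp. \<forall>a2\<in>Qp. \<forall>r\<in>Qp. (a1 \<noteq> 0 \<or> a2 \<noteq> 0) \<longrightarrow> a1 * y + a2 * z \<noteq> r)"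

lemma AE_good: "AE p in lborel. good (fst p) (snd p)"
proof (rule AE_I')
  let ?I = "{(a1, a2, r). a1 \<in> Qp \<and> a2 \<in> Qp \<and> r \<in> Qp \<and> (a1 \<noteq> 0 \<or> a2 \<noteq> 0)}"
  let ?N = "\<lambda>(a1::real, a2::real, r::real). {x :: real \<times> real. (a1, a2) \<bullet> x = r}"
  have "countable ?I"
    by (rule countable_subset[of _ "Qp \<times> Qp \<times> Qp"]) (auto simp: countable_Qp)
  moreover have "?N i \<in> null_sets lborel" if "i \<in> ?I" for i
  proof -
    obtain a1 a2 r where i0: "i = (a1, a2, r)" by (cases i)
    have i: "i = (a1, a2, r)" "a1 \<noteq> 0 \<or> a2 \<noteq> 0" using that i0 by auto
    have neg: "negligible {x :: real \<times> real. (a1, a2) \<bullet> x = r}"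
      by (rule negligible_hyperplane) (use i in \<open>auto simp: zero_prod_def\<close>)
    have cl: "closed {x :: real \<times> real. (a1, a2) \<bullet> x = r}"
      by (rule closed_hyperplane)
    show ?thesis using neg cl i
      by (auto simp: negligible_iff_null_sets null_sets_completion_iff borel_closed)
  qed
  ultimately show "(\<Union>i\<in>?I. ?N i) \<in> null_sets lborel" by (rule null_sets_UN')
  show "{x \<in> space lborel. \<not> good (fst x) (snd x)} \<subseteq> (\<Union>i\<in>?I. ?N i)"
    by (force simp: good_def inner_prod_def)
qed


lemma mulphi: "u < v \<Longrightarrow> phi * u < phi * v" using phi_pos by simp
lemma phi_phi: "phi * (phi * x) = phi * x + x" using phi_sq by (metis distrib_right mult.assoc mult_1)
lemma div_phi: "x / phi = x * phi - x" using inv_phi by (metis right_diff_distrib' mult.right_neutral times_divide_eq_right)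
lemma mulA: "u < v \<Longrightarrow> (2 - phi) * u < (2 - phi) * v" using phi_bounds by simp
lemma mulB: "u < v \<Longrightarrow> (2*phi - 3) * u < (2*phi - 3) * v" using phi_bounds by simp
lemma frac_pos: "0 \<le> x \<Longrightarrow> x < 1 \<Longrightarrow> frac x = x" by (simp add: frac_eq)
lemma frac_neg1: "-1 \<le> x \<Longrightarrow> x < 0 \<Longrightarrow> frac x = x + 1"
  using frac_eq[of "x+1"] by (simp add: frac_def)

lemma hit_m: "hit theta0 (0,y,z) l t \<longleftrightarrow> (case l of a \<Rightarrow> t/2 \<in> \<int> | b \<Rightarrow> y + t*(phi-1) \<in> \<int> | c \<Rightarrow> z + t*(2-phi) \<in> \<int>)"
  by (cases l) (simp_all add: hit_def theta0_def inv_phi[symmetric] inv_phi2[symmetric])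

lemma hitA_block:
  assumes "t0 = 2 * real n" "t0 \<le> t" "t < t0 + 2"
  shows "t/2 \<in> \<int> \<longleftrightarrow> t = t0"
proof
  assume "t/2 \<in> \<int>"
  then obtain J where J: "t/2 = of_int J" by (auto elim: Ints_cases)
  have r1: "real n \<le> real_of_int J" and r2: "real_of_int J < real n + 1" using J assms by linarith+
  have "real_of_int (int n) \<le> real_of_int J" "real_of_int J < real_of_int (int n + 1)" using r1 r2 by simp_all
  hence "int n \<le> J" "J < int n + 1" by (simp only: of_int_le_iff of_int_less_iff)+
  hence Jn: "J = int n" by linarith
  have "t = 2 * real_of_int J" using J by simp
  thus "t = t0" using Jn assms by simp
next
  assume "t = t0" thus "t/2 \<in> \<int>" using assms by simp
qed

lemma phi_b: "8 < 5*phi" "10*phi < 17" using phi_bounds by simp_all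
lemma phi_b2: "161 < 100*phi" "100*phi < 162"
proof -
  have "2.22 < sqrt 5" by (rule real_less_rsqrt) (simp add: power2_eq_square)
  moreover have "sqrt 5 < 2.24" by (rule real_less_lsqrt) (simp_all add: power2_eq_square)
  ultimately show "161 < 100*phi" "100*phi < 162" unfolding phi_def by auto
qed
lemma phi_m1: "phi * (phi - 1) = 1" using phi_sq by (simp add: algebra_simps)
lemma phi_m2: "(phi + 1) * (2 - phi) = 1" using phi_sq by (simp add: algebra_simps)

lemma hitB_block:
  assumes K: "y + t0*(phi-1) - Y = of_int K" and Y: "0 < Y" "Y < 1" and t: "t0 \<le> t" "t < t0 + 2"
  shows "(y + t*(phi-1) \<in> \<int>) \<longleftrightarrow> (t = t0 + phi*(1-Y) \<or> (4 - 2*phi < Y \<and> t = t0 + phi*(2-Y)))"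
proof
  assume "y + t*(phi-1) \<in> \<int>"
  then obtain J where J: "y + t*(phi-1) = of_int J" by (auto elim: Ints_cases)
  have e: "(t - t0)*(phi-1) = of_int (J - K) - Y" using J K by (simp add: algebra_simps)
  have d0: "0 \<le> t - t0" "t - t0 < 2" using t by auto
  have q0: "0 \<le> (t - t0)*(phi-1)" using d0 phi_bounds by simp
  have dl: "(t - t0)*(phi-1) < 2*(phi-1)" using d0 phi_bounds by (intro mult_strict_right_mono) auto
  have dl': "(t - t0)*(phi-1) < 2*phi - 2" using dl by (simp add: algebra_simps)
  obtain q where qd: "q = (t - t0)*(phi-1)" by simp
  have "0 < real_of_int (J-K)" "real_of_int (J-K) < 3"
    using e[folded qd] q0[folded qd] dl'[folded qd] Y phi_b by linarith+
  hence "0 < J - K" "J - K < 3" by linarith+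
  hence JK: "J - K = 1 \<or> J - K = 2" by linarith
  have "phi * ((t - t0) * (phi - 1)) = (t - t0) * (phi * (phi - 1))" by (rule mult.left_commute)
  also have "\<dots> = t - t0" by (simp only: phi_m1 mult_1_right)
  finally have key: "t - t0 = phi * ((t - t0) * (phi - 1))" by (rule sym)
  show "t = t0 + phi*(1-Y) \<or> (4 - 2*phi < Y \<and> t = t0 + phi*(2-Y))"
    using JK
  proof (elim disjE)
    assume "J - K = 1"
    hence "(t - t0)*(phi-1) = 1 - Y" using e by simp
    from key[unfolded this] show ?thesis by simp
  next
    assume "J - K = 2"
    hence d2: "(t - t0)*(phi-1) = 2 - Y" using e by simp
    from key[unfolded this] have "t - t0 = phi * (2 - Y)" .
    moreover have "4 - 2*phi < Y" using d2 dl by simp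
    ultimately show ?thesis by simp
  qed
next
  assume "t = t0 + phi*(1-Y) \<or> (4 - 2*phi < Y \<and> t = t0 + phi*(2-Y))"
  then obtain j :: int where tj: "t = t0 + phi * (of_int j - Y)" by (metis of_int_1 of_int_numeral)
  have "t*(phi-1) = t0*(phi-1) + (of_int j - Y)*(phi*(phi-1))" unfolding tj by (simp add: algebra_simps)
  hence "y + t*(phi-1) = (y + t0*(phi-1) - Y) + of_int j" unfolding phi_m1 by simp
  thus "y + t*(phi-1) \<in> \<int>" using K by simp
qed

lemma hitC_block:
  assumes K: "z + t0*(2-phi) - Z = of_int K" and Z: "0 < Z" "Z < 1" and t: "t0 \<le> t" "t < t0 + 2"
  shows "(z + t*(2-phi) \<in> \<int>) \<longleftrightarrow> (2*phi - 3 < Z \<and> t = t0 + (phi+1)*(1-Z))"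
proof
  assume "z + t*(2-phi) \<in> \<int>"
  then obtain J where J: "z + t*(2-phi) = of_int J" by (auto elim: Ints_cases)
  have e: "(t - t0)*(2-phi) = of_int (J - K) - Z" using J K by (simp add: algebra_simps)
  have d0: "0 \<le> t - t0" "t - t0 < 2" using t by auto
  have q0: "0 \<le> (t - t0)*(2-phi)" using d0 phi_bounds by simp
  have dl: "(t - t0)*(2-phi) < 2*(2-phi)" using d0 phi_bounds by (intro mult_strict_right_mono) auto
  have dl': "(t - t0)*(2-phi) < 4 - 2*phi" using dl by (simp add: algebra_simps)
  obtain q where qd: "q = (t - t0)*(2-phi)" by simp
  have "0 < real_of_int (J-K)" "real_of_int (J-K) < 2"
    using e[folded qd] q0[folded qd] dl'[folded qd] Z phi_b by linarith+
  hence "J - K = 1" by linarith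
  hence d1: "(t - t0)*(2-phi) = 1 - Z" using e by simp
  have "(phi + 1) * ((t - t0) * (2 - phi)) = (t - t0) * ((phi + 1) * (2 - phi))" by (rule mult.left_commute)
  also have "\<dots> = t - t0" by (simp only: phi_m2 mult_1_right)
  finally have key: "t - t0 = (phi + 1) * ((t - t0) * (2 - phi))" by (rule sym)
  from key[unfolded d1] have "t - t0 = (phi + 1) * (1 - Z)" .
  moreover have "2*phi - 3 < Z" using d1 dl by simp
  ultimately show "2*phi - 3 < Z \<and> t = t0 + (phi+1)*(1-Z)" by simp
next
  assume "2*phi - 3 < Z \<and> t = t0 + (phi+1)*(1-Z)"
  hence tj: "t = t0 + (phi+1)*(1-Z)" by simp
  have "t*(2-phi) = t0*(2-phi) + (1-Z)*((phi+1)*(2-phi))" unfolding tj by (simp add: algebra_simps)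
  hence "z + t*(2-phi) = (z + t0*(2-phi) - Z) + 1" unfolding phi_m2 by simp
  thus "z + t*(2-phi) \<in> \<int>" using K by simp
qed

lemma ordB1: assumes "0 < Y" "Y < 1" shows "0 < phi*(1-Y)" "phi*(1-Y) < 2" "phi*(1-Y) < phi*(2-Y)"
proof -
  have p: "0 < phi*Y" using assms phi_pos by simp
  have e: "phi*(1-Y) = phi - phi*Y" "phi*(2-Y) = 2*phi - phi*Y" by (simp_all add: algebra_simps)
  show "0 < phi*(1-Y)" "phi*(1-Y) < 2" "phi*(1-Y) < phi*(2-Y)"
    unfolding e using p assms phi_b mulphi[OF assms(2)] by linarith+
qed
lemma ordB2: assumes "4 - 2*phi < Y" "Y < 1" shows "phi*(2-Y) < 2"
  using assms mulphi[OF assms(1)] mulphi[OF assms(2)] mulA[OF assms(1)] mulA[OF assms(2)] mulB[OF assms(1)] mulB[OF assms(2)] phi_bounds by (simp add: algebra_simps phi_phi phi_sq)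
lemma ordC: assumes "2*phi - 3 < Z" "Z < 1" shows "0 < (phi+1)*(1-Z)" "(phi+1)*(1-Z) < 2"
  using assms mulphi[OF assms(1)] mulphi[OF assms(2)] mulA[OF assms(1)] mulA[OF assms(2)] mulB[OF assms(1)] mulB[OF assms(2)] phi_bounds by (simp_all add: algebra_simps phi_phi phi_sq)
lemma ordCB1: assumes "Z > 2 - phi + Y/phi" shows "(phi+1)*(1-Z) < phi*(1-Y)"
  using assms mulphi[OF assms(1)] mulA[OF assms(1)] mulB[OF assms(1)] phi_bounds by (simp add: algebra_simps phi_phi phi_sq div_phi)
lemma ordB1C: assumes "Z < 2 - phi + Y/phi" shows "phi*(1-Y) < (phi+1)*(1-Z)"
  using assms mulphi[OF assms(1)] mulA[OF assms(1)] mulB[OF assms(1)] phi_bounds by (simp add: algebra_simps phi_phi phi_sq div_phi)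
lemma ordCB2: assumes "Z > 3 - 2*phi + Y/phi" shows "(phi+1)*(1-Z) < phi*(2-Y)"
  using assms mulphi[OF assms(1)] mulA[OF assms(1)] mulB[OF assms(1)] phi_bounds by (simp add: algebra_simps phi_phi phi_sq div_phi)
lemma ordB2C: assumes "Z < 3 - 2*phi + Y/phi" shows "phi*(2-Y) < (phi+1)*(1-Z)"
  using assms mulphi[OF assms(1)] mulA[OF assms(1)] mulB[OF assms(1)] phi_bounds by (simp add: algebra_simps phi_phi phi_sq div_phi)

definition blk :: "alph7 \<Rightarrow> real \<Rightarrow> real \<Rightarrow> real \<Rightarrow> (real \<times> abc) list" where
  "blk i t0 Y Z = (let B1 = t0 + phi*(1-Y); B2 = t0 + phi*(2-Y); C = t0 + (phi+1)*(1-Z) in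
    (case i of a1 \<Rightarrow> [(t0,a),(C,c),(B1,b)] | a2 \<Rightarrow> [(t0,a),(B1,b),(C,c)]
     | a3 \<Rightarrow> [(t0,a),(B1,b),(C,c),(B2,b)] | a4 \<Rightarrow> [(t0,a),(B1,b),(B2,b)]
     | a5 \<Rightarrow> [(t0,a),(B1,b),(B2,b),(C,c)] | a6 \<Rightarrow> [(t0,a),(C,c),(B1,b),(B2,b)]
     | a7 \<Rightarrow> [(t0,a),(B1,b)]))"

lemma blk_ok:
  assumes t0: "t0 = 2 * real n" and K: "y + t0*(phi-1) - Y = of_int K" and K2: "z + t0*(2-phi) - Z = of_int K2"
  and Y: "0 < Y" "Y < 1" and Z: "0 < Z" "Z < 1" and PP: "(Y,Z) \<in> P i"
  shows "sorted_wrt (<) (map fst (blk i t0 Y Z))"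
    "\<And>p. p \<in> set (blk i t0 Y Z) \<Longrightarrow> t0 \<le> fst p \<and> fst p < t0 + 2 \<and> hit theta0 (0,y,z) (snd p) (fst p)"
    "\<And>t l. t0 \<le> t \<Longrightarrow> t < t0 + 2 \<Longrightarrow> hit theta0 (0,y,z) l t \<Longrightarrow> t \<in> fst ` set (blk i t0 Y Z)"
    "map snd (blk i t0 Y Z) = Phi i"
proof -
  define B1 where "B1 = t0 + phi*(1-Y)"
  define B2 where "B2 = t0 + phi*(2-Y)"
  define C where "C = t0 + (phi+1)*(1-Z)"
  have bl: "blk i t0 Y Z = (case i of a1 \<Rightarrow> [(t0,a),(C,c),(B1,b)] | a2 \<Rightarrow> [(t0,a),(B1,b),(C,c)]
     | a3 \<Rightarrow> [(t0,a),(B1,b),(C,c),(B2,b)] | a4 \<Rightarrow> [(t0,a),(B1,b),(B2,b)]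
     | a5 \<Rightarrow> [(t0,a),(B1,b),(B2,b),(C,c)] | a6 \<Rightarrow> [(t0,a),(C,c),(B1,b),(B2,b)]
     | a7 \<Rightarrow> [(t0,a),(B1,b)])" unfolding blk_def B1_def B2_def C_def Let_def ..
  have hA: "t/2 \<in> \<int> \<longleftrightarrow> t = t0" if "t0 \<le> t" "t < t0 + 2" for t
    using hitA_block[OF t0 that] .
  have hB: "(y + t*(phi-1) \<in> \<int>) \<longleftrightarrow> (t = B1 \<or> (4 - 2*phi < Y \<and> t = B2))" if "t0 \<le> t" "t < t0 + 2" for t
    using hitB_block[OF K Y that] unfolding B1_def B2_def .
  have hC: "(z + t*(2-phi) \<in> \<int>) \<longleftrightarrow> (2*phi - 3 < Z \<and> t = C)" if "t0 \<le> t" "t < t0 + 2" for t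
    using hitC_block[OF K2 Z that] unfolding C_def .
  have o1: "t0 < B1" "B1 < t0 + 2" "B1 < B2" using ordB1[OF Y] unfolding B1_def B2_def by simp_all
  have o2: "B2 < t0 + 2" if "4 - 2*phi < Y" using ordB2[OF that Y(2)] unfolding B2_def by simp
  have o3: "t0 < C" "C < t0 + 2" if "2*phi - 3 < Z" using ordC[OF that Z(2)] unfolding C_def by simp_all
  have o4: "C < B1" if "Z > 2 - phi + Y/phi" using ordCB1[OF that] unfolding C_def B1_def by simp
  have o5: "B1 < C" if "Z < 2 - phi + Y/phi" using ordB1C[OF that] unfolding C_def B1_def by simp
  have o6: "C < B2" if "Z > 3 - 2*phi + Y/phi" using ordCB2[OF that] unfolding C_def B2_def by simp
  have o7: "B2 < C" if "Z < 3 - 2*phi + Y/phi" using ordB2C[OF that] unfolding C_def B2_def by simp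
  have ht0: "t0 / 2 \<in> \<int>" using t0 by simp
  have hB1: "hit theta0 (0,y,z) b B1" using hB[of B1] o1 unfolding hit_m by simp
  have hB2: "hit theta0 (0,y,z) b B2" if "4 - 2*phi < Y" using hB[of B2] o1 o2[OF that] that unfolding hit_m by simp
  have hCC: "hit theta0 (0,y,z) c C" if "2*phi - 3 < Z" using hC[of C] o3[OF that] that unfolding hit_m by simp
  have hA0: "hit theta0 (0,y,z) a t0" unfolding hit_m using ht0 by simp
  have B2C: "B2 < C" if "2*phi - 3 < Z" "Z < 3 - 2*phi + Y/phi" "4 - 2*phi < Y" using o7 that by simp
  have P': "case i of
        a7 \<Rightarrow> Y < 4 - 2*phi \<and> Z < 2*phi - 3
      | a4 \<Rightarrow> Y > 4 - 2*phi \<and> Z < 2*phi - 3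
      | a2 \<Rightarrow> Y < 4 - 2*phi \<and> 2*phi - 3 < Z \<and> Z < (2 - phi) + Y / phi
      | a1 \<Rightarrow> Y < 4 - 2*phi \<and> Z > (2 - phi) + Y / phi
      | a5 \<Rightarrow> Y > 4 - 2*phi \<and> 2*phi - 3 < Z \<and> Z < (3 - 2*phi) + Y / phi
      | a3 \<Rightarrow> Y > 4 - 2*phi \<and> (3 - 2*phi) + Y / phi < Z \<and> Z < (2 - phi) + Y / phi
      | a6 \<Rightarrow> Y > 4 - 2*phi \<and> Z > (2 - phi) + Y / phi" using PP unfolding P_def by simp
  have z1: "2*phi - 3 < Z" if "Z > (2 - phi) + Y / phi"
  proof -
    have "0 < Y / phi" using Y phi_pos by simp
    thus ?thesis using that phi_b2 by linarith
  qed
  have z2: "2*phi - 3 < Z" if "(3 - 2*phi) + Y / phi < Z" "4 - 2*phi < Y"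
  proof -
    have "(4 - 2*phi)/phi < Y/phi" using that(2) phi_pos by (simp add: divide_strict_right_mono)
    moreover have "(4 - 2*phi)/phi = 4*phi - 6" unfolding div_phi by (simp add: algebra_simps phi_sq phi_phi)
    ultimately show ?thesis using that(1) by linarith
  qed
  have z3: "Z > 3 - 2*phi + Y/phi" if "Z > (2 - phi) + Y / phi" using that phi_bounds by simp
  define ok where "ok L \<longleftrightarrow> sorted_wrt (<) (map fst L) \<and>
    (\<forall>p\<in>set L. t0 \<le> fst p \<and> fst p < t0 + 2 \<and> hit theta0 (0,y,z) (snd p) (fst p)) \<and>
    (\<forall>t. (t = t0 \<or> t = B1 \<or> (4 - 2*phi < Y \<and> t = B2) \<or> (2*phi - 3 < Z \<and> t = C)) \<longrightarrow> t \<in> fst ` set L)" for L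
  have okb: "ok (blk i t0 Y Z)"
  proof (cases i)
    case a1
    hence cc: "Y < 4 - 2*phi" "Z > 2 - phi + Y/phi" using P' by simp_all
    have dd: "2*phi - 3 < Z" "C < B1" using cc z1 o4 by simp_all
    show ?thesis unfolding ok_def blk_def Let_def B1_def[symmetric] B2_def[symmetric] C_def[symmetric] using cc dd a1 o1 hA0 hB1 o3[OF dd(1)] hCC[OF dd(1)] by auto
  next
    case a2
    hence cc: "Y < 4 - 2*phi" "2*phi - 3 < Z" "Z < 2 - phi + Y/phi" using P' by simp_all
    have dd: "B1 < C" using cc o5 by simp_all
    show ?thesis unfolding ok_def blk_def Let_def B1_def[symmetric] B2_def[symmetric] C_def[symmetric] using cc dd a2 o1 hA0 hB1 o3[OF cc(2)] hCC[OF cc(2)] by auto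
  next
    case a3
    hence cc: "4 - 2*phi < Y" "3 - 2*phi + Y/phi < Z" "Z < 2 - phi + Y/phi" using P' by simp_all
    have dd: "2*phi - 3 < Z" "C < B2" "B1 < C" using cc z2 o6 o5 by simp_all
    show ?thesis unfolding ok_def blk_def Let_def B1_def[symmetric] B2_def[symmetric] C_def[symmetric] using cc dd a3 o1 hA0 hB1 o2[OF cc(1)] hB2[OF cc(1)] o3[OF dd(1)] hCC[OF dd(1)] by auto
  next
    case a4
    hence cc: "4 - 2*phi < Y" "Z < 2*phi - 3" using P' by simp_all
    have dd: True by simp
    show ?thesis unfolding ok_def blk_def Let_def B1_def[symmetric] B2_def[symmetric] C_def[symmetric] using cc dd a4 o1 hA0 hB1 o2[OF cc(1)] hB2[OF cc(1)] by auto
  next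
    case a5
    hence cc: "4 - 2*phi < Y" "2*phi - 3 < Z" "Z < 3 - 2*phi + Y/phi" using P' by simp_all
    have dd: "B2 < C" using cc o7 by simp_all
    show ?thesis unfolding ok_def blk_def Let_def B1_def[symmetric] B2_def[symmetric] C_def[symmetric] using cc dd a5 o1 hA0 hB1 o2[OF cc(1)] hB2[OF cc(1)] o3[OF cc(2)] hCC[OF cc(2)] by auto
  next
    case a6
    hence cc: "4 - 2*phi < Y" "Z > 2 - phi + Y/phi" using P' by simp_all
    have dd: "2*phi - 3 < Z" "C < B1" using cc z1 o4 by simp_all
    show ?thesis unfolding ok_def blk_def Let_def B1_def[symmetric] B2_def[symmetric] C_def[symmetric] using cc dd a6 o1 hA0 hB1 o2[OF cc(1)] hB2[OF cc(1)] o3[OF dd(1)] hCC[OF dd(1)] by auto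
  next
    case a7
    hence cc: "Y < 4 - 2*phi" "Z < 2*phi - 3" using P' by simp_all
    have dd: True by simp
    show ?thesis unfolding ok_def blk_def Let_def B1_def[symmetric] B2_def[symmetric] C_def[symmetric] using cc dd a7 o1 hA0 hB1  by auto
  qed
  thus "sorted_wrt (<) (map fst (blk i t0 Y Z))"
    "\<And>p. p \<in> set (blk i t0 Y Z) \<Longrightarrow> t0 \<le> fst p \<and> fst p < t0 + 2 \<and> hit theta0 (0,y,z) (snd p) (fst p)"
    unfolding ok_def by blast+
  show "map snd (blk i t0 Y Z) = Phi i" unfolding bl by (cases i) auto
  fix t l assume t: "t0 \<le> t" "t < t0 + 2" "hit theta0 (0,y,z) l t"
  have "t = t0 \<or> t = B1 \<or> (4 - 2*phi < Y \<and> t = B2) \<or> (2*phi - 3 < Z \<and> t = C)"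
    using t(3) hA[OF t(1,2)] hB[OF t(1,2)] hC[OF t(1,2)] unfolding hit_m by (cases l) auto
  thus "t \<in> fst ` set (blk i t0 Y Z)" using okb unfolding ok_def by blast
qed



lemma Phi_ne: "Phi x \<noteq> []" by (cases x) auto

lemma sorted_less_nth:
  assumes "sorted_wrt (<) (xs :: real list)" "i < length xs" "j < length xs"
  shows "xs ! j < xs ! i \<longleftrightarrow> j < i"
  using assms
  by (metis linorder_neqE_nat not_less_iff_gr_or_eq sorted_wrt_nth_less)

lemma sorted_take_set:
  assumes "sorted_wrt (<) (xs :: real list)" "i < length xs"
  shows "{s \<in> set xs. s < xs ! i} = set (take i xs)"
proof
  show "{s \<in> set xs. s < xs ! i} \<subseteq> set (take i xs)"
  proof
    fix s assume "s \<in> {s \<in> set xs. s < xs ! i}"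
    then obtain j where j: "j < length xs" "s = xs ! j" "s < xs ! i" by (auto simp: in_set_conv_nth)
    hence "j < i" using sorted_less_nth[OF assms(1,2) j(1)] by simp
    thus "s \<in> set (take i xs)" using j assms(2) by (auto simp: in_set_conv_nth)
  qed
  show "set (take i xs) \<subseteq> {s \<in> set xs. s < xs ! i}"
  proof
    fix s assume "s \<in> set (take i xs)"
    then obtain j where j: "j < i" "s = xs ! j" using assms(2) by (auto simp: in_set_conv_nth)
    have jl: "j < length xs" using j assms(2) by simp
    have "s \<in> set xs" using jl j by simp
    moreover have "s < xs ! i" using sorted_less_nth[OF assms(1,2) jl] j by simp
    ultimately show "s \<in> {s \<in> set xs. s < xs ! i}" by simp
  qed
qed

lemma billiard_blocks:
  fixes B :: "nat \<Rightarrow> (real \<times> abc) list" and v :: "nat \<Rightarrow> alph7"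
  assumes uniq: "\<And>t l1 l2. hit \<theta> m l1 t \<Longrightarrow> hit \<theta> m l2 t \<Longrightarrow> l1 = l2"
  and Bs: "\<And>k. sorted_wrt (<) (map fst (B k))"
  and Bin: "\<And>k p. p \<in> set (B k) \<Longrightarrow> 2 * real k \<le> fst p \<and> fst p < 2 * real k + 2 \<and> hit \<theta> m (snd p) (fst p)"
  and Bc: "\<And>k t l. 2 * real k \<le> t \<Longrightarrow> t < 2 * real k + 2 \<Longrightarrow> hit \<theta> m l t \<Longrightarrow> t \<in> fst ` set (B k)"
  and Bl: "\<And>k. map snd (B k) = Phi (v k)"
  shows "billiard \<theta> m = Phi_inf v"
proof
  fix n
  define W where "W K = concat (map B [0..<K])" for K
  have WS: "W (Suc K) = W K @ B K" for K by (simp add: W_def)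
  have W2: "\<forall>p\<in>set (W K). 0 \<le> fst p \<and> fst p < 2 * real K \<and> hit \<theta> m (snd p) (fst p)" for K
  proof (induction K)
    case 0 thus ?case by (simp add: W_def)
  next
    case (Suc K)
    show ?case unfolding WS
    proof
      fix p assume "p \<in> set (W K @ B K)"
      thus "0 \<le> fst p \<and> fst p < 2 * real (Suc K) \<and> hit \<theta> m (snd p) (fst p)"
        using Suc.IH Bin[of p K] by (auto simp: algebra_simps)
    qed
  qed
  have W1: "sorted_wrt (<) (map fst (W K))" for K
  proof (induction K)
    case 0 thus ?case by (simp add: W_def)
  next
    case (Suc K)
    have "\<forall>x\<in>set (map fst (W K)). \<forall>y\<in>set (map fst (B K)). x < y"
      using W2[of K] Bin[of _ K] by fastforce
    thus ?case unfolding WS using Suc.IH Bs[of K] by (simp add: sorted_wrt_append)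
  qed
  have W3: "t \<in> fst ` set (W K)" if "0 \<le> t" "t < 2 * real K" "hit \<theta> m l t" for t l K
    using that
  proof (induction K)
    case 0 thus ?case by simp
  next
    case (Suc K)
    show ?case
    proof (cases "t < 2 * real K")
      case True thus ?thesis using Suc by (auto simp: WS)
    next
      case False thus ?thesis using Suc Bc[of K t l] by (auto simp: WS)
    qed
  qed
  have W4: "map snd (W K) = concat (map (Phi \<circ> v) [0..<K])" for K
    by (induction K) (simp_all add: WS Bl W_def)
  have W5: "K \<le> length (W K)" for K
  proof (induction K)
    case 0 thus ?case by simp
  next
    case (Suc K)
    have "length (B K) = length (Phi (v K))" using arg_cong[OF Bl[of K], of length] by simp
    moreover have "length (Phi (v K)) \<ge> 1" using Phi_ne[of "v K"] by (cases "Phi (v K)") auto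
    ultimately show ?case using Suc by (simp add: WS)
  qed
  have W6: "\<exists>r. W K' = W K @ r" if "K \<le> K'" for K K'
    using that
  proof (induction K' rule: dec_induct)
    case base thus ?case by simp
  next
    case (step K') thus ?case by (auto simp: WS)
  qed
  have cnt: "card {s. 0 \<le> s \<and> s < fst (W K ! i) \<and> (\<exists>l'. hit \<theta> m l' s)} = i"
    if "i < length (W K)" for K i
  proof -
    let ?xs = "map fst (W K)"
    have i: "i < length ?xs" using that by simp
    have "{s. 0 \<le> s \<and> s < fst (W K ! i) \<and> (\<exists>l'. hit \<theta> m l' s)} = {s \<in> set ?xs. s < ?xs ! i}"
    proof (intro equalityI subsetI)
      fix s assume s: "s \<in> {s. 0 \<le> s \<and> s < fst (W K ! i) \<and> (\<exists>l'. hit \<theta> m l' s)}"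
      have "fst (W K ! i) < 2 * real K" using W2[of K] that by (meson nth_mem)
      thus "s \<in> {s \<in> set ?xs. s < ?xs ! i}" using s W3[of s K] that by auto
    next
      fix s assume "s \<in> {s \<in> set ?xs. s < ?xs ! i}"
      then obtain p where p: "p \<in> set (W K)" "s = fst p" "s < ?xs ! i" by auto
      thus "s \<in> {s. 0 \<le> s \<and> s < fst (W K ! i) \<and> (\<exists>l'. hit \<theta> m l' s)}"
        using W2[of K] that by auto
    qed
    also have "\<dots> = set (take i ?xs)" by (rule sorted_take_set[OF W1 i])
    moreover have "distinct (take i ?xs)" using W1[of K] by (simp add: strict_sorted_iff distinct_take)
    ultimately show ?thesis
      using i by (simp add: distinct_card)
  qed
  define K where "K = Suc n"
  have nK: "n < length (W K)" using W5[of K] by (simp add: K_def)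
  define t0 where "t0 = fst (W K ! n)"
  define l0 where "l0 = snd (W K ! n)"
  have Pn: "Phi_inf v n = l0"
    unfolding Phi_inf_def l0_def using W4[of K] nK
    by (metis K_def nth_map)
  have h0: "0 \<le> t0" "hit \<theta> m l0 t0" using W2[of K] nK unfolding t0_def l0_def by (meson nth_mem)+
  have c0: "card {s. 0 \<le> s \<and> s < t0 \<and> (\<exists>l'. hit \<theta> m l' s)} = n" unfolding t0_def by (rule cnt[OF nK])
  show "billiard \<theta> m n = Phi_inf v n"
    unfolding billiard_def Pn
  proof (rule the_equality)
    show "\<exists>t\<ge>0. hit \<theta> m l0 t \<and> card {s. 0 \<le> s \<and> s < t \<and> (\<exists>l'. hit \<theta> m l' s)} = n"
      using h0 c0 by blast
  next
    fix l assume "\<exists>t\<ge>0. hit \<theta> m l t \<and> card {s. 0 \<le> s \<and> s < t \<and> (\<exists>l'. hit \<theta> m l' s)} = n"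
    then obtain t where t: "0 \<le> t" "hit \<theta> m l t" "card {s. 0 \<le> s \<and> s < t \<and> (\<exists>l'. hit \<theta> m l' s)} = n"
      by blast
    define K' where "K' = max K (nat \<lceil>t\<rceil>)"
    have "t \<le> real K'" unfolding K'_def by linarith
    moreover have "1 \<le> real K'" unfolding K'_def K_def by simp
    ultimately have tK: "t < 2 * real K'" by linarith
    have KK: "K \<le> K'" unfolding K'_def by simp
    obtain p where p: "p \<in> set (W K')" "t = fst p" using W3[OF t(1) tK t(2)] by auto
    then obtain i where i: "i < length (W K')" "p = W K' ! i" by (auto simp: in_set_conv_nth)
    have "i = n" using cnt[OF i(1)] t(3) p(2) i(2) by simp
    moreover obtain r where r: "W K' = W K @ r" using W6[OF KK] by blast
    ultimately have "t = t0" using p i nK unfolding t0_def by (simp add: nth_append)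
    thus "l = l0" using uniq[OF t(2)] h0(2) by simp
  qed
qed

definition Qform :: "real \<Rightarrow> real \<Rightarrow> bool" where
  "Qform w x \<longleftrightarrow> (\<exists>\<beta> cc. \<beta> \<in> Qp \<and> cc \<in> Qp \<and> x = \<beta> * w + cc)"

lemma Qf_c: "cc \<in> Qp \<Longrightarrow> Qform w cc"
  unfolding Qform_def by (rule exI[of _ 0], rule exI[of _ cc]) (simp add: Qp_0)
lemma Qf_w: "Qform w w"
  unfolding Qform_def by (rule exI[of _ 1], rule exI[of _ 0]) (simp add: Qp_0 Qp_1)
lemma Qf_wc: "cc \<in> Qp \<Longrightarrow> Qform w (w + cc)"
  unfolding Qform_def by (rule exI[of _ 1], rule exI[of _ cc]) (simp add: Qp_1)
lemma Qf_pw: "cc \<in> Qp \<Longrightarrow> Qform w ((phi - 1)*w + cc)"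
  unfolding Qform_def by (rule exI[of _ "phi - 1"], rule exI[of _ cc]) (simp add: Qp_diff Qp_phi Qp_1)
lemma Qc2: "2 - phi \<in> Qp" by (intro Qp_diff Qp_numeral Qp_phi)
lemma Qc3: "3 - 2*phi \<in> Qp" by (intro Qp_diff Qp_mult Qp_numeral Qp_phi)
lemma Qc4: "4 - 2*phi \<in> Qp" by (intro Qp_diff Qp_mult Qp_numeral Qp_phi)

fun chain :: "real list \<Rightarrow> bool" where
  "chain (x # y # xs) = (x < y \<and> chain (y # xs))"
| "chain _ = True"

lemma chain_nth: "chain xs \<Longrightarrow> Suc j < length xs \<Longrightarrow> xs ! j < xs ! Suc j"
  by (induction xs arbitrary: j rule: chain.induct) (auto simp: nth_Cons split: nat.splits)

fun ivs :: "real \<Rightarrow> real list \<Rightarrow> alph7 list \<Rightarrow> bool" where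
  "ivs w (x # y # xs) (l # ls) = ((\<forall>s. x < s \<longrightarrow> s < y \<longrightarrow> (s, frac (w - s)) \<in> P l) \<and> ivs w (y # xs) ls)"
| "ivs w _ _ = True"

lemma ivs_nth: "ivs w xs ls \<Longrightarrow> Suc j < length xs \<Longrightarrow> j < length ls \<Longrightarrow> xs ! j < s \<Longrightarrow> s < xs ! Suc j
  \<Longrightarrow> (s, frac (w - s)) \<in> P (ls ! j)"
  by (induction w xs ls arbitrary: j rule: ivs.induct) (auto simp: nth_Cons split: nat.splits)

definition circ_ok :: "real \<Rightarrow> (nat \<Rightarrow> real) \<Rightarrow> (nat \<Rightarrow> alph7) \<Rightarrow> bool" where
  "circ_ok w cu lab \<longleftrightarrow> cu 0 = 0 \<and> cu 6 = 1 \<and> (\<forall>j<6. cu j < cu (Suc j)) \<and>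
    (\<forall>j<6. \<forall>s. cu j < s \<longrightarrow> s < cu (Suc j) \<longrightarrow> (s, frac (w - s)) \<in> P (lab j)) \<and>
    (\<forall>j<5. lab j \<noteq> lab (Suc j)) \<and> (\<forall>j\<le>6. Qform w (cu j))"

lemma all5: "(\<forall>j<5. Q j) \<longleftrightarrow> Q 0 \<and> Q 1 \<and> Q 2 \<and> Q 3 \<and> Q (4::nat)"
  by (auto simp: less_Suc_eq numeral_eq_Suc)

lemma circ_ok_I:
  assumes "length CL = 7" "length LB = 6" "CL ! 0 = 0" "CL ! 6 = 1" "chain CL" "ivs w CL LB"
    "list_all (Qform w) CL" "LB ! 0 \<noteq> LB ! 1" "LB ! 1 \<noteq> LB ! 2" "LB ! 2 \<noteq> LB ! 3" "LB ! 3 \<noteq> LB ! 4"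
    "LB ! 4 \<noteq> LB ! 5"
  shows "circ_ok w (\<lambda>j. CL ! j) (\<lambda>j. LB ! j)"
  unfolding circ_ok_def
proof (intro conjI allI impI)
  show "CL ! 0 = 0" "CL ! 6 = 1" by fact+
  show "CL ! j < CL ! Suc j" if "j < 6" for j using chain_nth[OF assms(5)] that assms(1) by simp
  show "(s, frac (w - s)) \<in> P (LB ! j)" if "j < 6" "CL ! j < s" "s < CL ! Suc j" for j s
    using ivs_nth[OF assms(6)] that assms(1,2) by simp
  show "LB ! j \<noteq> LB ! Suc j" if "j < 5" for j
  proof -
    have "j = 0 \<or> j = 1 \<or> j = 2 \<or> j = 3 \<or> j = 4" using that by linarith
    thus ?thesis using assms(8-12) by (elim disjE) (simp_all add: numeral_eq_Suc)
  qed
  show "Qform w (CL ! j)" if "j \<le> 6" for j using assms(7,1) that by (simp add: list_all_length)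
qed

lemma circ_1_0:
  assumes "0 < w" "w < 2*phi - 3" "0 < s" "s < w"
  shows "(s, frac (w - s)) \<in> P a7"
proof -
  have side: "s < w" "0 < s" "s < 1"
    using assms mulphi[OF assms(1)] mulphi[OF assms(2)] mulphi[OF assms(3)] mulphi[OF assms(4)] mulA[OF assms(1)] mulA[OF assms(2)] mulA[OF assms(3)] mulA[OF assms(4)] mulB[OF assms(1)] mulB[OF assms(2)] mulB[OF assms(3)] mulB[OF assms(4)] phi_bounds by (simp_all add: algebra_simps phi_phi phi_sq div_phi)
  have f: "frac (w - s) = w - s"
    using side assms(1,2) phi_bounds by (intro frac_pos) simp_all
  show ?thesis unfolding P_def f
    using assms mulphi[OF assms(1)] mulphi[OF assms(2)] mulphi[OF assms(3)] mulphi[OF assms(4)] mulA[OF assms(1)] mulA[OF assms(2)] mulA[OF assms(3)] mulA[OF assms(4)] mulB[OF assms(1)] mulB[OF assms(2)] mulB[OF assms(3)] mulB[OF assms(4)] phi_bounds by (simp add: algebra_simps phi_phi phi_sq div_phi)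
qed

lemma circ_1_1:
  assumes "0 < w" "w < 2*phi - 3" "w < s" "s < (phi - 1)*w + (2 - phi)"
  shows "(s, frac (w - s)) \<in> P a1"
proof -
  have side: "w < s" "0 < s" "s < 1"
    using assms mulphi[OF assms(1)] mulphi[OF assms(2)] mulphi[OF assms(3)] mulphi[OF assms(4)] mulA[OF assms(1)] mulA[OF assms(2)] mulA[OF assms(3)] mulA[OF assms(4)] mulB[OF assms(1)] mulB[OF assms(2)] mulB[OF assms(3)] mulB[OF assms(4)] phi_bounds by (simp_all add: algebra_simps phi_phi phi_sq div_phi)
  have f: "frac (w - s) = w - s + 1"
    using side assms(1,2) phi_bounds by (intro frac_neg1) simp_all
  show ?thesis unfolding P_def f
    using assms mulphi[OF assms(1)] mulphi[OF assms(2)] mulphi[OF assms(3)] mulphi[OF assms(4)] mulA[OF assms(1)] mulA[OF assms(2)] mulA[OF assms(3)] mulA[OF assms(4)] mulB[OF assms(1)] mulB[OF assms(2)] mulB[OF assms(3)] mulB[OF assms(4)] phi_bounds by (simp add: algebra_simps phi_phi phi_sq div_phi)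
qed

lemma circ_1_2:
  assumes "0 < w" "w < 2*phi - 3" "(phi - 1)*w + (2 - phi) < s" "s < 4 - 2*phi"
  shows "(s, frac (w - s)) \<in> P a2"
proof -
  have side: "w < s" "0 < s" "s < 1"
    using assms mulphi[OF assms(1)] mulphi[OF assms(2)] mulphi[OF assms(3)] mulphi[OF assms(4)] mulA[OF assms(1)] mulA[OF assms(2)] mulA[OF assms(3)] mulA[OF assms(4)] mulB[OF assms(1)] mulB[OF assms(2)] mulB[OF assms(3)] mulB[OF assms(4)] phi_bounds by (simp_all add: algebra_simps phi_phi phi_sq div_phi)
  have f: "frac (w - s) = w - s + 1"
    using side assms(1,2) phi_bounds by (intro frac_neg1) simp_all
  show ?thesis unfolding P_def f
    using assms mulphi[OF assms(1)] mulphi[OF assms(2)] mulphi[OF assms(3)] mulphi[OF assms(4)] mulA[OF assms(1)] mulA[OF assms(2)] mulA[OF assms(3)] mulA[OF assms(4)] mulB[OF assms(1)] mulB[OF assms(2)] mulB[OF assms(3)] mulB[OF assms(4)] phi_bounds by (simp add: algebra_simps phi_phi phi_sq div_phi)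
qed

lemma circ_1_3:
  assumes "0 < w" "w < 2*phi - 3" "4 - 2*phi < s" "s < (phi - 1)*w + (4 - 2*phi)"
  shows "(s, frac (w - s)) \<in> P a3"
proof -
  have side: "w < s" "0 < s" "s < 1"
    using assms mulphi[OF assms(1)] mulphi[OF assms(2)] mulphi[OF assms(3)] mulphi[OF assms(4)] mulA[OF assms(1)] mulA[OF assms(2)] mulA[OF assms(3)] mulA[OF assms(4)] mulB[OF assms(1)] mulB[OF assms(2)] mulB[OF assms(3)] mulB[OF assms(4)] phi_bounds by (simp_all add: algebra_simps phi_phi phi_sq div_phi)
  have f: "frac (w - s) = w - s + 1"
    using side assms(1,2) phi_bounds by (intro frac_neg1) simp_all
  show ?thesis unfolding P_def f
    using assms mulphi[OF assms(1)] mulphi[OF assms(2)] mulphi[OF assms(3)] mulphi[OF assms(4)] mulA[OF assms(1)] mulA[OF assms(2)] mulA[OF assms(3)] mulA[OF assms(4)] mulB[OF assms(1)] mulB[OF assms(2)] mulB[OF assms(3)] mulB[OF assms(4)] phi_bounds by (simp add: algebra_simps phi_phi phi_sq div_phi)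
qed

lemma circ_1_4:
  assumes "0 < w" "w < 2*phi - 3" "(phi - 1)*w + (4 - 2*phi) < s" "s < w + (4 - 2*phi)"
  shows "(s, frac (w - s)) \<in> P a5"
proof -
  have side: "w < s" "0 < s" "s < 1"
    using assms mulphi[OF assms(1)] mulphi[OF assms(2)] mulphi[OF assms(3)] mulphi[OF assms(4)] mulA[OF assms(1)] mulA[OF assms(2)] mulA[OF assms(3)] mulA[OF assms(4)] mulB[OF assms(1)] mulB[OF assms(2)] mulB[OF assms(3)] mulB[OF assms(4)] phi_bounds by (simp_all add: algebra_simps phi_phi phi_sq div_phi)
  have f: "frac (w - s) = w - s + 1"
    using side assms(1,2) phi_bounds by (intro frac_neg1) simp_all
  show ?thesis unfolding P_def f
    using assms mulphi[OF assms(1)] mulphi[OF assms(2)] mulphi[OF assms(3)] mulphi[OF assms(4)] mulA[OF assms(1)] mulA[OF assms(2)] mulA[OF assms(3)] mulA[OF assms(4)] mulB[OF assms(1)] mulB[OF assms(2)] mulB[OF assms(3)] mulB[OF assms(4)] phi_bounds by (simp add: algebra_simps phi_phi phi_sq div_phi)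
qed

lemma circ_1_5:
  assumes "0 < w" "w < 2*phi - 3" "w + (4 - 2*phi) < s" "s < 1"
  shows "(s, frac (w - s)) \<in> P a4"
proof -
  have side: "w < s" "0 < s" "s < 1"
    using assms mulphi[OF assms(1)] mulphi[OF assms(2)] mulphi[OF assms(3)] mulphi[OF assms(4)] mulA[OF assms(1)] mulA[OF assms(2)] mulA[OF assms(3)] mulA[OF assms(4)] mulB[OF assms(1)] mulB[OF assms(2)] mulB[OF assms(3)] mulB[OF assms(4)] phi_bounds by (simp_all add: algebra_simps phi_phi phi_sq div_phi)
  have f: "frac (w - s) = w - s + 1"
    using side assms(1,2) phi_bounds by (intro frac_neg1) simp_all
  show ?thesis unfolding P_def f
    using assms mulphi[OF assms(1)] mulphi[OF assms(2)] mulphi[OF assms(3)] mulphi[OF assms(4)] mulA[OF assms(1)] mulA[OF assms(2)] mulA[OF assms(3)] mulA[OF assms(4)] mulB[OF assms(1)] mulB[OF assms(2)] mulB[OF assms(3)] mulB[OF assms(4)] phi_bounds by (simp add: algebra_simps phi_phi phi_sq div_phi)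
qed

lemma regime_1:
  assumes "0 < w" "w < 2*phi - 3"
  shows "circ_ok w (\<lambda>j. [0, w, (phi - 1)*w + (2 - phi), 4 - 2*phi, (phi - 1)*w + (4 - 2*phi), w + (4 - 2*phi), 1] ! j) (\<lambda>j. [a7, a1, a2, a3, a5, a4] ! j)"
proof (rule circ_ok_I)
  have w1: "w < 1" "0 < w" using assms phi_b2 by linarith+
  have m: "0 < w" "w < (phi - 1)*w + (2 - phi)" "(phi - 1)*w + (2 - phi) < 4 - 2*phi" "4 - 2*phi < (phi - 1)*w + (4 - 2*phi)" "(phi - 1)*w + (4 - 2*phi) < w + (4 - 2*phi)" "w + (4 - 2*phi) < 1"
    using assms mulphi[OF assms(1)] mulphi[OF assms(2)] mulA[OF assms(1)] mulA[OF assms(2)] mulB[OF assms(1)] mulB[OF assms(2)] phi_bounds mulphi[OF w1(1)] mulA[OF w1(1)] mulB[OF w1(1)] by (simp_all add: algebra_simps phi_phi phi_sq div_phi)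
  show "chain [0, w, (phi - 1)*w + (2 - phi), 4 - 2*phi, (phi - 1)*w + (4 - 2*phi), w + (4 - 2*phi), 1]" using m by (simp only: chain.simps simp_thms)
  show "ivs w [0, w, (phi - 1)*w + (2 - phi), 4 - 2*phi, (phi - 1)*w + (4 - 2*phi), w + (4 - 2*phi), 1] [a7, a1, a2, a3, a5, a4]" using circ_1_0[OF assms] circ_1_1[OF assms] circ_1_2[OF assms] circ_1_3[OF assms] circ_1_4[OF assms] circ_1_5[OF assms] by (simp only: ivs.simps simp_thms) blast
  show "list_all (Qform w) [0, w, (phi - 1)*w + (2 - phi), 4 - 2*phi, (phi - 1)*w + (4 - 2*phi), w + (4 - 2*phi), 1]" using Qf_c[OF Qp_0] Qf_w Qf_pw[OF Qc2] Qf_c[OF Qc4] Qf_pw[OF Qc4] Qf_wc[OF Qc4] Qf_c[OF Qp_1] by (simp only: list.pred_inject simp_thms)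
qed simp_all

lemma circ_2_0:
  assumes "2*phi - 3 < w" "w < 2 - phi" "0 < s" "s < w + (3 - 2*phi)"
  shows "(s, frac (w - s)) \<in> P a2"
proof -
  have side: "s < w" "0 < s" "s < 1"
    using assms mulphi[OF assms(1)] mulphi[OF assms(2)] mulphi[OF assms(3)] mulphi[OF assms(4)] mulA[OF assms(1)] mulA[OF assms(2)] mulA[OF assms(3)] mulA[OF assms(4)] mulB[OF assms(1)] mulB[OF assms(2)] mulB[OF assms(3)] mulB[OF assms(4)] phi_bounds by (simp_all add: algebra_simps phi_phi phi_sq div_phi)
  have f: "frac (w - s) = w - s"
    using side assms(1,2) phi_bounds by (intro frac_pos) simp_all
  have ps: "0 < phi * s" using phi_pos assms(3) by simp
  show ?thesis unfolding P_def f
    apply (simp add: algebra_simps phi_phi phi_sq div_phi)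
    using assms phi_bounds ps by (safe; linarith)
qed

lemma circ_2_1:
  assumes "2*phi - 3 < w" "w < 2 - phi" "w + (3 - 2*phi) < s" "s < w"
  shows "(s, frac (w - s)) \<in> P a7"
proof -
  have side: "s < w" "0 < s" "s < 1"
    using assms mulphi[OF assms(1)] mulphi[OF assms(2)] mulphi[OF assms(3)] mulphi[OF assms(4)] mulA[OF assms(1)] mulA[OF assms(2)] mulA[OF assms(3)] mulA[OF assms(4)] mulB[OF assms(1)] mulB[OF assms(2)] mulB[OF assms(3)] mulB[OF assms(4)] phi_bounds by (simp_all add: algebra_simps phi_phi phi_sq div_phi)
  have f: "frac (w - s) = w - s"
    using side assms(1,2) phi_bounds by (intro frac_pos) simp_all
  show ?thesis unfolding P_def f
    using assms mulphi[OF assms(1)] mulphi[OF assms(2)] mulphi[OF assms(3)] mulphi[OF assms(4)] mulA[OF assms(1)] mulA[OF assms(2)] mulA[OF assms(3)] mulA[OF assms(4)] mulB[OF assms(1)] mulB[OF assms(2)] mulB[OF assms(3)] mulB[OF assms(4)] phi_bounds by (simp add: algebra_simps phi_phi phi_sq div_phi)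
qed

lemma circ_2_2:
  assumes "2*phi - 3 < w" "w < 2 - phi" "w < s" "s < (phi - 1)*w + (2 - phi)"
  shows "(s, frac (w - s)) \<in> P a1"
proof -
  have side: "w < s" "0 < s" "s < 1"
    using assms mulphi[OF assms(1)] mulphi[OF assms(2)] mulphi[OF assms(3)] mulphi[OF assms(4)] mulA[OF assms(1)] mulA[OF assms(2)] mulA[OF assms(3)] mulA[OF assms(4)] mulB[OF assms(1)] mulB[OF assms(2)] mulB[OF assms(3)] mulB[OF assms(4)] phi_bounds by (simp_all add: algebra_simps phi_phi phi_sq div_phi)
  have f: "frac (w - s) = w - s + 1"
    using side assms(1,2) phi_bounds by (intro frac_neg1) simp_all
  show ?thesis unfolding P_def f
    using assms mulphi[OF assms(1)] mulphi[OF assms(2)] mulphi[OF assms(3)] mulphi[OF assms(4)] mulA[OF assms(1)] mulA[OF assms(2)] mulA[OF assms(3)] mulA[OF assms(4)] mulB[OF assms(1)] mulB[OF assms(2)] mulB[OF assms(3)] mulB[OF assms(4)] phi_bounds by (simp add: algebra_simps phi_phi phi_sq div_phi)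
qed

lemma circ_2_3:
  assumes "2*phi - 3 < w" "w < 2 - phi" "(phi - 1)*w + (2 - phi) < s" "s < 4 - 2*phi"
  shows "(s, frac (w - s)) \<in> P a2"
proof -
  have side: "w < s" "0 < s" "s < 1"
    using assms mulphi[OF assms(1)] mulphi[OF assms(2)] mulphi[OF assms(3)] mulphi[OF assms(4)] mulA[OF assms(1)] mulA[OF assms(2)] mulA[OF assms(3)] mulA[OF assms(4)] mulB[OF assms(1)] mulB[OF assms(2)] mulB[OF assms(3)] mulB[OF assms(4)] phi_bounds by (simp_all add: algebra_simps phi_phi phi_sq div_phi)
  have f: "frac (w - s) = w - s + 1"
    using side assms(1,2) phi_bounds by (intro frac_neg1) simp_all
  show ?thesis unfolding P_def f
    using assms mulphi[OF assms(1)] mulphi[OF assms(2)] mulphi[OF assms(3)] mulphi[OF assms(4)] mulA[OF assms(1)] mulA[OF assms(2)] mulA[OF assms(3)] mulA[OF assms(4)] mulB[OF assms(1)] mulB[OF assms(2)] mulB[OF assms(3)] mulB[OF assms(4)] phi_bounds by (simp add: algebra_simps phi_phi phi_sq div_phi)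
qed

lemma circ_2_4:
  assumes "2*phi - 3 < w" "w < 2 - phi" "4 - 2*phi < s" "s < (phi - 1)*w + (4 - 2*phi)"
  shows "(s, frac (w - s)) \<in> P a3"
proof -
  have side: "w < s" "0 < s" "s < 1"
    using assms mulphi[OF assms(1)] mulphi[OF assms(2)] mulphi[OF assms(3)] mulphi[OF assms(4)] mulA[OF assms(1)] mulA[OF assms(2)] mulA[OF assms(3)] mulA[OF assms(4)] mulB[OF assms(1)] mulB[OF assms(2)] mulB[OF assms(3)] mulB[OF assms(4)] phi_bounds by (simp_all add: algebra_simps phi_phi phi_sq div_phi)
  have f: "frac (w - s) = w - s + 1"
    using side assms(1,2) phi_bounds by (intro frac_neg1) simp_all
  show ?thesis unfolding P_def f
    using assms mulphi[OF assms(1)] mulphi[OF assms(2)] mulphi[OF assms(3)] mulphi[OF assms(4)] mulA[OF assms(1)] mulA[OF assms(2)] mulA[OF assms(3)] mulA[OF assms(4)] mulB[OF assms(1)] mulB[OF assms(2)] mulB[OF assms(3)] mulB[OF assms(4)] phi_bounds by (simp add: algebra_simps phi_phi phi_sq div_phi)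
qed

lemma circ_2_5:
  assumes "2*phi - 3 < w" "w < 2 - phi" "(phi - 1)*w + (4 - 2*phi) < s" "s < 1"
  shows "(s, frac (w - s)) \<in> P a5"
proof -
  have side: "w < s" "0 < s" "s < 1"
    using assms mulphi[OF assms(1)] mulphi[OF assms(2)] mulphi[OF assms(3)] mulphi[OF assms(4)] mulA[OF assms(1)] mulA[OF assms(2)] mulA[OF assms(3)] mulA[OF assms(4)] mulB[OF assms(1)] mulB[OF assms(2)] mulB[OF assms(3)] mulB[OF assms(4)] phi_bounds by (simp_all add: algebra_simps phi_phi phi_sq div_phi)
  have f: "frac (w - s) = w - s + 1"
    using side assms(1,2) phi_bounds by (intro frac_neg1) simp_all
  show ?thesis unfolding P_def f
    using assms mulphi[OF assms(1)] mulphi[OF assms(2)] mulphi[OF assms(3)] mulphi[OF assms(4)] mulA[OF assms(1)] mulA[OF assms(2)] mulA[OF assms(3)] mulA[OF assms(4)] mulB[OF assms(1)] mulB[OF assms(2)] mulB[OF assms(3)] mulB[OF assms(4)] phi_bounds by (simp add: algebra_simps phi_phi phi_sq div_phi)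
qed

lemma regime_2:
  assumes "2*phi - 3 < w" "w < 2 - phi"
  shows "circ_ok w (\<lambda>j. [0, w + (3 - 2*phi), w, (phi - 1)*w + (2 - phi), 4 - 2*phi, (phi - 1)*w + (4 - 2*phi), 1] ! j) (\<lambda>j. [a2, a7, a1, a2, a3, a5] ! j)"
proof (rule circ_ok_I)
  have w1: "w < 1" "0 < w" using assms phi_b2 by linarith+
  have m: "0 < w + (3 - 2*phi)" "w + (3 - 2*phi) < w" "w < (phi - 1)*w + (2 - phi)" "(phi - 1)*w + (2 - phi) < 4 - 2*phi" "4 - 2*phi < (phi - 1)*w + (4 - 2*phi)" "(phi - 1)*w + (4 - 2*phi) < 1"
    using assms mulphi[OF assms(1)] mulphi[OF assms(2)] mulA[OF assms(1)] mulA[OF assms(2)] mulB[OF assms(1)] mulB[OF assms(2)] phi_bounds mulphi[OF w1(1)] mulA[OF w1(1)] mulB[OF w1(1)] by (simp_all add: algebra_simps phi_phi phi_sq div_phi)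
  show "chain [0, w + (3 - 2*phi), w, (phi - 1)*w + (2 - phi), 4 - 2*phi, (phi - 1)*w + (4 - 2*phi), 1]" using m by (simp only: chain.simps simp_thms)
  show "ivs w [0, w + (3 - 2*phi), w, (phi - 1)*w + (2 - phi), 4 - 2*phi, (phi - 1)*w + (4 - 2*phi), 1] [a2, a7, a1, a2, a3, a5]" using circ_2_0[OF assms] circ_2_1[OF assms] circ_2_2[OF assms] circ_2_3[OF assms] circ_2_4[OF assms] circ_2_5[OF assms] by (simp only: ivs.simps simp_thms) blast
  show "list_all (Qform w) [0, w + (3 - 2*phi), w, (phi - 1)*w + (2 - phi), 4 - 2*phi, (phi - 1)*w + (4 - 2*phi), 1]" using Qf_c[OF Qp_0] Qf_wc[OF Qc3] Qf_w Qf_pw[OF Qc2] Qf_c[OF Qc4] Qf_pw[OF Qc4] Qf_c[OF Qp_1] by (simp only: list.pred_inject simp_thms)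
qed simp_all

lemma circ_3_0:
  assumes "2 - phi < w" "w < phi - 1" "0 < s" "s < (phi - 1)*w + (3 - 2*phi)"
  shows "(s, frac (w - s)) \<in> P a1"
proof -
  have side: "s < w" "0 < s" "s < 1"
    using assms mulphi[OF assms(1)] mulphi[OF assms(2)] mulphi[OF assms(3)] mulphi[OF assms(4)] mulA[OF assms(1)] mulA[OF assms(2)] mulA[OF assms(3)] mulA[OF assms(4)] mulB[OF assms(1)] mulB[OF assms(2)] mulB[OF assms(3)] mulB[OF assms(4)] phi_bounds by (simp_all add: algebra_simps phi_phi phi_sq div_phi)
  have f: "frac (w - s) = w - s"
    using side assms(1,2) phi_bounds by (intro frac_pos) simp_all
  show ?thesis unfolding P_def f
    using assms mulphi[OF assms(1)] mulphi[OF assms(2)] mulphi[OF assms(3)] mulphi[OF assms(4)] mulA[OF assms(1)] mulA[OF assms(2)] mulA[OF assms(3)] mulA[OF assms(4)] mulB[OF assms(1)] mulB[OF assms(2)] mulB[OF assms(3)] mulB[OF assms(4)] phi_bounds by (simp add: algebra_simps phi_phi phi_sq div_phi)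
qed

lemma circ_3_1:
  assumes "2 - phi < w" "w < phi - 1" "(phi - 1)*w + (3 - 2*phi) < s" "s < w + (3 - 2*phi)"
  shows "(s, frac (w - s)) \<in> P a2"
proof -
  have side: "s < w" "0 < s" "s < 1"
    using assms mulphi[OF assms(1)] mulphi[OF assms(2)] mulphi[OF assms(3)] mulphi[OF assms(4)] mulA[OF assms(1)] mulA[OF assms(2)] mulA[OF assms(3)] mulA[OF assms(4)] mulB[OF assms(1)] mulB[OF assms(2)] mulB[OF assms(3)] mulB[OF assms(4)] phi_bounds by (simp_all add: algebra_simps phi_phi phi_sq div_phi)
  have f: "frac (w - s) = w - s"
    using side assms(1,2) phi_bounds by (intro frac_pos) simp_all
  show ?thesis unfolding P_def f
    using assms mulphi[OF assms(1)] mulphi[OF assms(2)] mulphi[OF assms(3)] mulphi[OF assms(4)] mulA[OF assms(1)] mulA[OF assms(2)] mulA[OF assms(3)] mulA[OF assms(4)] mulB[OF assms(1)] mulB[OF assms(2)] mulB[OF assms(3)] mulB[OF assms(4)] phi_bounds by (simp add: algebra_simps phi_phi phi_sq div_phi)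
qed

lemma circ_3_2:
  assumes "2 - phi < w" "w < phi - 1" "w + (3 - 2*phi) < s" "s < w"
  shows "(s, frac (w - s)) \<in> P a7"
proof -
  have side: "s < w" "0 < s" "s < 1"
    using assms mulphi[OF assms(1)] mulphi[OF assms(2)] mulphi[OF assms(3)] mulphi[OF assms(4)] mulA[OF assms(1)] mulA[OF assms(2)] mulA[OF assms(3)] mulA[OF assms(4)] mulB[OF assms(1)] mulB[OF assms(2)] mulB[OF assms(3)] mulB[OF assms(4)] phi_bounds by (simp_all add: algebra_simps phi_phi phi_sq div_phi)
  have f: "frac (w - s) = w - s"
    using side assms(1,2) phi_bounds by (intro frac_pos) simp_all
  show ?thesis unfolding P_def f
    using assms mulphi[OF assms(1)] mulphi[OF assms(2)] mulphi[OF assms(3)] mulphi[OF assms(4)] mulA[OF assms(1)] mulA[OF assms(2)] mulA[OF assms(3)] mulA[OF assms(4)] mulB[OF assms(1)] mulB[OF assms(2)] mulB[OF assms(3)] mulB[OF assms(4)] phi_bounds by (simp add: algebra_simps phi_phi phi_sq div_phi)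
qed

lemma circ_3_3:
  assumes "2 - phi < w" "w < phi - 1" "w < s" "s < (phi - 1)*w + (2 - phi)"
  shows "(s, frac (w - s)) \<in> P a1"
proof -
  have side: "w < s" "0 < s" "s < 1"
    using assms mulphi[OF assms(1)] mulphi[OF assms(2)] mulphi[OF assms(3)] mulphi[OF assms(4)] mulA[OF assms(1)] mulA[OF assms(2)] mulA[OF assms(3)] mulA[OF assms(4)] mulB[OF assms(1)] mulB[OF assms(2)] mulB[OF assms(3)] mulB[OF assms(4)] phi_bounds by (simp_all add: algebra_simps phi_phi phi_sq div_phi)
  have f: "frac (w - s) = w - s + 1"
    using side assms(1,2) phi_bounds by (intro frac_neg1) simp_all
  show ?thesis unfolding P_def f
    using assms mulphi[OF assms(1)] mulphi[OF assms(2)] mulphi[OF assms(3)] mulphi[OF assms(4)] mulA[OF assms(1)] mulA[OF assms(2)] mulA[OF assms(3)] mulA[OF assms(4)] mulB[OF assms(1)] mulB[OF assms(2)] mulB[OF assms(3)] mulB[OF assms(4)] phi_bounds by (simp add: algebra_simps phi_phi phi_sq div_phi)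
qed

lemma circ_3_4:
  assumes "2 - phi < w" "w < phi - 1" "(phi - 1)*w + (2 - phi) < s" "s < 4 - 2*phi"
  shows "(s, frac (w - s)) \<in> P a2"
proof -
  have side: "w < s" "0 < s" "s < 1"
    using assms mulphi[OF assms(1)] mulphi[OF assms(2)] mulphi[OF assms(3)] mulphi[OF assms(4)] mulA[OF assms(1)] mulA[OF assms(2)] mulA[OF assms(3)] mulA[OF assms(4)] mulB[OF assms(1)] mulB[OF assms(2)] mulB[OF assms(3)] mulB[OF assms(4)] phi_bounds by (simp_all add: algebra_simps phi_phi phi_sq div_phi)
  have f: "frac (w - s) = w - s + 1"
    using side assms(1,2) phi_bounds by (intro frac_neg1) simp_all
  show ?thesis unfolding P_def f
    using assms mulphi[OF assms(1)] mulphi[OF assms(2)] mulphi[OF assms(3)] mulphi[OF assms(4)] mulA[OF assms(1)] mulA[OF assms(2)] mulA[OF assms(3)] mulA[OF assms(4)] mulB[OF assms(1)] mulB[OF assms(2)] mulB[OF assms(3)] mulB[OF assms(4)] phi_bounds by (simp add: algebra_simps phi_phi phi_sq div_phi)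
qed

lemma circ_3_5:
  assumes "2 - phi < w" "w < phi - 1" "4 - 2*phi < s" "s < 1"
  shows "(s, frac (w - s)) \<in> P a3"
proof -
  have side: "w < s" "0 < s" "s < 1"
    using assms mulphi[OF assms(1)] mulphi[OF assms(2)] mulphi[OF assms(3)] mulphi[OF assms(4)] mulA[OF assms(1)] mulA[OF assms(2)] mulA[OF assms(3)] mulA[OF assms(4)] mulB[OF assms(1)] mulB[OF assms(2)] mulB[OF assms(3)] mulB[OF assms(4)] phi_bounds by (simp_all add: algebra_simps phi_phi phi_sq div_phi)
  have f: "frac (w - s) = w - s + 1"
    using side assms(1,2) phi_bounds by (intro frac_neg1) simp_all
  show ?thesis unfolding P_def f
    using assms mulphi[OF assms(1)] mulphi[OF assms(2)] mulphi[OF assms(3)] mulphi[OF assms(4)] mulA[OF assms(1)] mulA[OF assms(2)] mulA[OF assms(3)] mulA[OF assms(4)] mulB[OF assms(1)] mulB[OF assms(2)] mulB[OF assms(3)] mulB[OF assms(4)] phi_bounds by (simp add: algebra_simps phi_phi phi_sq div_phi)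
qed

lemma regime_3:
  assumes "2 - phi < w" "w < phi - 1"
  shows "circ_ok w (\<lambda>j. [0, (phi - 1)*w + (3 - 2*phi), w + (3 - 2*phi), w, (phi - 1)*w + (2 - phi), 4 - 2*phi, 1] ! j) (\<lambda>j. [a1, a2, a7, a1, a2, a3] ! j)"
proof (rule circ_ok_I)
  have w1: "w < 1" "0 < w" using assms phi_b2 by linarith+
  have m: "0 < (phi - 1)*w + (3 - 2*phi)" "(phi - 1)*w + (3 - 2*phi) < w + (3 - 2*phi)" "w + (3 - 2*phi) < w" "w < (phi - 1)*w + (2 - phi)" "(phi - 1)*w + (2 - phi) < 4 - 2*phi" "4 - 2*phi < 1"
    using assms mulphi[OF assms(1)] mulphi[OF assms(2)] mulA[OF assms(1)] mulA[OF assms(2)] mulB[OF assms(1)] mulB[OF assms(2)] phi_bounds mulphi[OF w1(1)] mulA[OF w1(1)] mulB[OF w1(1)] by (simp_all add: algebra_simps phi_phi phi_sq div_phi)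
  show "chain [0, (phi - 1)*w + (3 - 2*phi), w + (3 - 2*phi), w, (phi - 1)*w + (2 - phi), 4 - 2*phi, 1]" using m by (simp only: chain.simps simp_thms)
  show "ivs w [0, (phi - 1)*w + (3 - 2*phi), w + (3 - 2*phi), w, (phi - 1)*w + (2 - phi), 4 - 2*phi, 1] [a1, a2, a7, a1, a2, a3]" using circ_3_0[OF assms] circ_3_1[OF assms] circ_3_2[OF assms] circ_3_3[OF assms] circ_3_4[OF assms] circ_3_5[OF assms] by (simp only: ivs.simps simp_thms) blast
  show "list_all (Qform w) [0, (phi - 1)*w + (3 - 2*phi), w + (3 - 2*phi), w, (phi - 1)*w + (2 - phi), 4 - 2*phi, 1]" using Qf_c[OF Qp_0] Qf_pw[OF Qc3] Qf_wc[OF Qc3] Qf_w Qf_pw[OF Qc2] Qf_c[OF Qc4] Qf_c[OF Qp_1] by (simp only: list.pred_inject simp_thms)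
qed simp_all

lemma circ_4_0:
  assumes "phi - 1 < w" "w < 4 - 2*phi" "0 < s" "s < (phi - 1)*w + (3 - 2*phi)"
  shows "(s, frac (w - s)) \<in> P a1"
proof -
  have side: "s < w" "0 < s" "s < 1"
    using assms mulphi[OF assms(1)] mulphi[OF assms(2)] mulphi[OF assms(3)] mulphi[OF assms(4)] mulA[OF assms(1)] mulA[OF assms(2)] mulA[OF assms(3)] mulA[OF assms(4)] mulB[OF assms(1)] mulB[OF assms(2)] mulB[OF assms(3)] mulB[OF assms(4)] phi_bounds by (simp_all add: algebra_simps phi_phi phi_sq div_phi)
  have f: "frac (w - s) = w - s"
    using side assms(1,2) phi_bounds by (intro frac_pos) simp_all
  show ?thesis unfolding P_def f
    using assms mulphi[OF assms(1)] mulphi[OF assms(2)] mulphi[OF assms(3)] mulphi[OF assms(4)] mulA[OF assms(1)] mulA[OF assms(2)] mulA[OF assms(3)] mulA[OF assms(4)] mulB[OF assms(1)] mulB[OF assms(2)] mulB[OF assms(3)] mulB[OF assms(4)] phi_bounds by (simp add: algebra_simps phi_phi phi_sq div_phi)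
qed

lemma circ_4_1:
  assumes "phi - 1 < w" "w < 4 - 2*phi" "(phi - 1)*w + (3 - 2*phi) < s" "s < w + (3 - 2*phi)"
  shows "(s, frac (w - s)) \<in> P a2"
proof -
  have side: "s < w" "0 < s" "s < 1"
    using assms mulphi[OF assms(1)] mulphi[OF assms(2)] mulphi[OF assms(3)] mulphi[OF assms(4)] mulA[OF assms(1)] mulA[OF assms(2)] mulA[OF assms(3)] mulA[OF assms(4)] mulB[OF assms(1)] mulB[OF assms(2)] mulB[OF assms(3)] mulB[OF assms(4)] phi_bounds by (simp_all add: algebra_simps phi_phi phi_sq div_phi)
  have f: "frac (w - s) = w - s"
    using side assms(1,2) phi_bounds by (intro frac_pos) simp_all
  show ?thesis unfolding P_def f
    using assms mulphi[OF assms(1)] mulphi[OF assms(2)] mulphi[OF assms(3)] mulphi[OF assms(4)] mulA[OF assms(1)] mulA[OF assms(2)] mulA[OF assms(3)] mulA[OF assms(4)] mulB[OF assms(1)] mulB[OF assms(2)] mulB[OF assms(3)] mulB[OF assms(4)] phi_bounds by (simp add: algebra_simps phi_phi phi_sq div_phi)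
qed

lemma circ_4_2:
  assumes "phi - 1 < w" "w < 4 - 2*phi" "w + (3 - 2*phi) < s" "s < w"
  shows "(s, frac (w - s)) \<in> P a7"
proof -
  have side: "s < w" "0 < s" "s < 1"
    using assms mulphi[OF assms(1)] mulphi[OF assms(2)] mulphi[OF assms(3)] mulphi[OF assms(4)] mulA[OF assms(1)] mulA[OF assms(2)] mulA[OF assms(3)] mulA[OF assms(4)] mulB[OF assms(1)] mulB[OF assms(2)] mulB[OF assms(3)] mulB[OF assms(4)] phi_bounds by (simp_all add: algebra_simps phi_phi phi_sq div_phi)
  have f: "frac (w - s) = w - s"
    using side assms(1,2) phi_bounds by (intro frac_pos) simp_all
  show ?thesis unfolding P_def f
    using assms mulphi[OF assms(1)] mulphi[OF assms(2)] mulphi[OF assms(3)] mulphi[OF assms(4)] mulA[OF assms(1)] mulA[OF assms(2)] mulA[OF assms(3)] mulA[OF assms(4)] mulB[OF assms(1)] mulB[OF assms(2)] mulB[OF assms(3)] mulB[OF assms(4)] phi_bounds by (simp add: algebra_simps phi_phi phi_sq div_phi)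
qed

lemma circ_4_3:
  assumes "phi - 1 < w" "w < 4 - 2*phi" "w < s" "s < 4 - 2*phi"
  shows "(s, frac (w - s)) \<in> P a1"
proof -
  have side: "w < s" "0 < s" "s < 1"
    using assms mulphi[OF assms(1)] mulphi[OF assms(2)] mulphi[OF assms(3)] mulphi[OF assms(4)] mulA[OF assms(1)] mulA[OF assms(2)] mulA[OF assms(3)] mulA[OF assms(4)] mulB[OF assms(1)] mulB[OF assms(2)] mulB[OF assms(3)] mulB[OF assms(4)] phi_bounds by (simp_all add: algebra_simps phi_phi phi_sq div_phi)
  have f: "frac (w - s) = w - s + 1"
    using side assms(1,2) phi_bounds by (intro frac_neg1) simp_all
  show ?thesis unfolding P_def f
    using assms mulphi[OF assms(1)] mulphi[OF assms(2)] mulphi[OF assms(3)] mulphi[OF assms(4)] mulA[OF assms(1)] mulA[OF assms(2)] mulA[OF assms(3)] mulA[OF assms(4)] mulB[OF assms(1)] mulB[OF assms(2)] mulB[OF assms(3)] mulB[OF assms(4)] phi_bounds by (simp add: algebra_simps phi_phi phi_sq div_phi)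
qed

lemma circ_4_4:
  assumes "phi - 1 < w" "w < 4 - 2*phi" "4 - 2*phi < s" "s < (phi - 1)*w + (2 - phi)"
  shows "(s, frac (w - s)) \<in> P a6"
proof -
  have side: "w < s" "0 < s" "s < 1"
    using assms mulphi[OF assms(1)] mulphi[OF assms(2)] mulphi[OF assms(3)] mulphi[OF assms(4)] mulA[OF assms(1)] mulA[OF assms(2)] mulA[OF assms(3)] mulA[OF assms(4)] mulB[OF assms(1)] mulB[OF assms(2)] mulB[OF assms(3)] mulB[OF assms(4)] phi_bounds by (simp_all add: algebra_simps phi_phi phi_sq div_phi)
  have f: "frac (w - s) = w - s + 1"
    using side assms(1,2) phi_bounds by (intro frac_neg1) simp_all
  show ?thesis unfolding P_def f
    using assms mulphi[OF assms(1)] mulphi[OF assms(2)] mulphi[OF assms(3)] mulphi[OF assms(4)] mulA[OF assms(1)] mulA[OF assms(2)] mulA[OF assms(3)] mulA[OF assms(4)] mulB[OF assms(1)] mulB[OF assms(2)] mulB[OF assms(3)] mulB[OF assms(4)] phi_bounds by (simp add: algebra_simps phi_phi phi_sq div_phi)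
qed

lemma circ_4_5:
  assumes "phi - 1 < w" "w < 4 - 2*phi" "(phi - 1)*w + (2 - phi) < s" "s < 1"
  shows "(s, frac (w - s)) \<in> P a3"
proof -
  have side: "w < s" "0 < s" "s < 1"
    using assms mulphi[OF assms(1)] mulphi[OF assms(2)] mulphi[OF assms(3)] mulphi[OF assms(4)] mulA[OF assms(1)] mulA[OF assms(2)] mulA[OF assms(3)] mulA[OF assms(4)] mulB[OF assms(1)] mulB[OF assms(2)] mulB[OF assms(3)] mulB[OF assms(4)] phi_bounds by (simp_all add: algebra_simps phi_phi phi_sq div_phi)
  have f: "frac (w - s) = w - s + 1"
    using side assms(1,2) phi_bounds by (intro frac_neg1) simp_all
  show ?thesis unfolding P_def f
    using assms mulphi[OF assms(1)] mulphi[OF assms(2)] mulphi[OF assms(3)] mulphi[OF assms(4)] mulA[OF assms(1)] mulA[OF assms(2)] mulA[OF assms(3)] mulA[OF assms(4)] mulB[OF assms(1)] mulB[OF assms(2)] mulB[OF assms(3)] mulB[OF assms(4)] phi_bounds by (simp add: algebra_simps phi_phi phi_sq div_phi)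
qed

lemma regime_4:
  assumes "phi - 1 < w" "w < 4 - 2*phi"
  shows "circ_ok w (\<lambda>j. [0, (phi - 1)*w + (3 - 2*phi), w + (3 - 2*phi), w, 4 - 2*phi, (phi - 1)*w + (2 - phi), 1] ! j) (\<lambda>j. [a1, a2, a7, a1, a6, a3] ! j)"
proof (rule circ_ok_I)
  have w1: "w < 1" "0 < w" using assms phi_b2 by linarith+
  have m: "0 < (phi - 1)*w + (3 - 2*phi)" "(phi - 1)*w + (3 - 2*phi) < w + (3 - 2*phi)" "w + (3 - 2*phi) < w" "w < 4 - 2*phi" "4 - 2*phi < (phi - 1)*w + (2 - phi)" "(phi - 1)*w + (2 - phi) < 1"
    using assms mulphi[OF assms(1)] mulphi[OF assms(2)] mulA[OF assms(1)] mulA[OF assms(2)] mulB[OF assms(1)] mulB[OF assms(2)] phi_bounds mulphi[OF w1(1)] mulA[OF w1(1)] mulB[OF w1(1)] by (simp_all add: algebra_simps phi_phi phi_sq div_phi)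
  show "chain [0, (phi - 1)*w + (3 - 2*phi), w + (3 - 2*phi), w, 4 - 2*phi, (phi - 1)*w + (2 - phi), 1]" using m by (simp only: chain.simps simp_thms)
  show "ivs w [0, (phi - 1)*w + (3 - 2*phi), w + (3 - 2*phi), w, 4 - 2*phi, (phi - 1)*w + (2 - phi), 1] [a1, a2, a7, a1, a6, a3]" using circ_4_0[OF assms] circ_4_1[OF assms] circ_4_2[OF assms] circ_4_3[OF assms] circ_4_4[OF assms] circ_4_5[OF assms] by (simp only: ivs.simps simp_thms) blast
  show "list_all (Qform w) [0, (phi - 1)*w + (3 - 2*phi), w + (3 - 2*phi), w, 4 - 2*phi, (phi - 1)*w + (2 - phi), 1]" using Qf_c[OF Qp_0] Qf_pw[OF Qc3] Qf_wc[OF Qc3] Qf_w Qf_c[OF Qc4] Qf_pw[OF Qc2] Qf_c[OF Qp_1] by (simp only: list.pred_inject simp_thms)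
qed simp_all

lemma circ_5_0:
  assumes "4 - 2*phi < w" "w < 1" "0 < s" "s < (phi - 1)*w + (3 - 2*phi)"
  shows "(s, frac (w - s)) \<in> P a1"
proof -
  have side: "s < w" "0 < s" "s < 1"
    using assms mulphi[OF assms(1)] mulphi[OF assms(2)] mulphi[OF assms(3)] mulphi[OF assms(4)] mulA[OF assms(1)] mulA[OF assms(2)] mulA[OF assms(3)] mulA[OF assms(4)] mulB[OF assms(1)] mulB[OF assms(2)] mulB[OF assms(3)] mulB[OF assms(4)] phi_bounds by (simp_all add: algebra_simps phi_phi phi_sq div_phi)
  have f: "frac (w - s) = w - s"
    using side assms(1,2) phi_bounds by (intro frac_pos) simp_all
  show ?thesis unfolding P_def f
    using assms mulphi[OF assms(1)] mulphi[OF assms(2)] mulphi[OF assms(3)] mulphi[OF assms(4)] mulA[OF assms(1)] mulA[OF assms(2)] mulA[OF assms(3)] mulA[OF assms(4)] mulB[OF assms(1)] mulB[OF assms(2)] mulB[OF assms(3)] mulB[OF assms(4)] phi_bounds by (simp add: algebra_simps phi_phi phi_sq div_phi)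
qed

lemma circ_5_1:
  assumes "4 - 2*phi < w" "w < 1" "(phi - 1)*w + (3 - 2*phi) < s" "s < w + (3 - 2*phi)"
  shows "(s, frac (w - s)) \<in> P a2"
proof -
  have side: "s < w" "0 < s" "s < 1"
    using assms mulphi[OF assms(1)] mulphi[OF assms(2)] mulphi[OF assms(3)] mulphi[OF assms(4)] mulA[OF assms(1)] mulA[OF assms(2)] mulA[OF assms(3)] mulA[OF assms(4)] mulB[OF assms(1)] mulB[OF assms(2)] mulB[OF assms(3)] mulB[OF assms(4)] phi_bounds by (simp_all add: algebra_simps phi_phi phi_sq div_phi)
  have f: "frac (w - s) = w - s"
    using side assms(1,2) phi_bounds by (intro frac_pos) simp_all
  show ?thesis unfolding P_def f
    using assms mulphi[OF assms(1)] mulphi[OF assms(2)] mulphi[OF assms(3)] mulphi[OF assms(4)] mulA[OF assms(1)] mulA[OF assms(2)] mulA[OF assms(3)] mulA[OF assms(4)] mulB[OF assms(1)] mulB[OF assms(2)] mulB[OF assms(3)] mulB[OF assms(4)] phi_bounds by (simp add: algebra_simps phi_phi phi_sq div_phi)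
qed

lemma circ_5_2:
  assumes "4 - 2*phi < w" "w < 1" "w + (3 - 2*phi) < s" "s < 4 - 2*phi"
  shows "(s, frac (w - s)) \<in> P a7"
proof -
  have side: "s < w" "0 < s" "s < 1"
    using assms mulphi[OF assms(1)] mulphi[OF assms(2)] mulphi[OF assms(3)] mulphi[OF assms(4)] mulA[OF assms(1)] mulA[OF assms(2)] mulA[OF assms(3)] mulA[OF assms(4)] mulB[OF assms(1)] mulB[OF assms(2)] mulB[OF assms(3)] mulB[OF assms(4)] phi_bounds by (simp_all add: algebra_simps phi_phi phi_sq div_phi)
  have f: "frac (w - s) = w - s"
    using side assms(1,2) phi_bounds by (intro frac_pos) simp_all
  show ?thesis unfolding P_def f
    using assms mulphi[OF assms(1)] mulphi[OF assms(2)] mulphi[OF assms(3)] mulphi[OF assms(4)] mulA[OF assms(1)] mulA[OF assms(2)] mulA[OF assms(3)] mulA[OF assms(4)] mulB[OF assms(1)] mulB[OF assms(2)] mulB[OF assms(3)] mulB[OF assms(4)] phi_bounds by (simp add: algebra_simps phi_phi phi_sq div_phi)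
qed

lemma circ_5_3:
  assumes "4 - 2*phi < w" "w < 1" "4 - 2*phi < s" "s < w"
  shows "(s, frac (w - s)) \<in> P a4"
proof -
  have side: "s < w" "0 < s" "s < 1"
    using assms mulphi[OF assms(1)] mulphi[OF assms(2)] mulphi[OF assms(3)] mulphi[OF assms(4)] mulA[OF assms(1)] mulA[OF assms(2)] mulA[OF assms(3)] mulA[OF assms(4)] mulB[OF assms(1)] mulB[OF assms(2)] mulB[OF assms(3)] mulB[OF assms(4)] phi_bounds by (simp_all add: algebra_simps phi_phi phi_sq div_phi)
  have f: "frac (w - s) = w - s"
    using side assms(1,2) phi_bounds by (intro frac_pos) simp_all
  show ?thesis unfolding P_def f
    using assms mulphi[OF assms(1)] mulphi[OF assms(2)] mulphi[OF assms(3)] mulphi[OF assms(4)] mulA[OF assms(1)] mulA[OF assms(2)] mulA[OF assms(3)] mulA[OF assms(4)] mulB[OF assms(1)] mulB[OF assms(2)] mulB[OF assms(3)] mulB[OF assms(4)] phi_bounds by (simp add: algebra_simps phi_phi phi_sq div_phi)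
qed

lemma circ_5_4:
  assumes "4 - 2*phi < w" "w < 1" "w < s" "s < (phi - 1)*w + (2 - phi)"
  shows "(s, frac (w - s)) \<in> P a6"
proof -
  have side: "w < s" "0 < s" "s < 1"
    using assms mulphi[OF assms(1)] mulphi[OF assms(2)] mulphi[OF assms(3)] mulphi[OF assms(4)] mulA[OF assms(1)] mulA[OF assms(2)] mulA[OF assms(3)] mulA[OF assms(4)] mulB[OF assms(1)] mulB[OF assms(2)] mulB[OF assms(3)] mulB[OF assms(4)] phi_bounds by (simp_all add: algebra_simps phi_phi phi_sq div_phi)
  have f: "frac (w - s) = w - s + 1"
    using side assms(1,2) phi_bounds by (intro frac_neg1) simp_all
  show ?thesis unfolding P_def f
    using assms mulphi[OF assms(1)] mulphi[OF assms(2)] mulphi[OF assms(3)] mulphi[OF assms(4)] mulA[OF assms(1)] mulA[OF assms(2)] mulA[OF assms(3)] mulA[OF assms(4)] mulB[OF assms(1)] mulB[OF assms(2)] mulB[OF assms(3)] mulB[OF assms(4)] phi_bounds by (simp add: algebra_simps phi_phi phi_sq div_phi)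
qed

lemma circ_5_5:
  assumes "4 - 2*phi < w" "w < 1" "(phi - 1)*w + (2 - phi) < s" "s < 1"
  shows "(s, frac (w - s)) \<in> P a3"
proof -
  have side: "w < s" "0 < s" "s < 1"
    using assms mulphi[OF assms(1)] mulphi[OF assms(2)] mulphi[OF assms(3)] mulphi[OF assms(4)] mulA[OF assms(1)] mulA[OF assms(2)] mulA[OF assms(3)] mulA[OF assms(4)] mulB[OF assms(1)] mulB[OF assms(2)] mulB[OF assms(3)] mulB[OF assms(4)] phi_bounds by (simp_all add: algebra_simps phi_phi phi_sq div_phi)
  have f: "frac (w - s) = w - s + 1"
    using side assms(1,2) phi_bounds by (intro frac_neg1) simp_all
  show ?thesis unfolding P_def f
    using assms mulphi[OF assms(1)] mulphi[OF assms(2)] mulphi[OF assms(3)] mulphi[OF assms(4)] mulA[OF assms(1)] mulA[OF assms(2)] mulA[OF assms(3)] mulA[OF assms(4)] mulB[OF assms(1)] mulB[OF assms(2)] mulB[OF assms(3)] mulB[OF assms(4)] phi_bounds by (simp add: algebra_simps phi_phi phi_sq div_phi)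
qed

lemma regime_5:
  assumes "4 - 2*phi < w" "w < 1"
  shows "circ_ok w (\<lambda>j. [0, (phi - 1)*w + (3 - 2*phi), w + (3 - 2*phi), 4 - 2*phi, w, (phi - 1)*w + (2 - phi), 1] ! j) (\<lambda>j. [a1, a2, a7, a4, a6, a3] ! j)"
proof (rule circ_ok_I)
  have w1: "w < 1" "0 < w" using assms phi_b2 by linarith+
  have m: "0 < (phi - 1)*w + (3 - 2*phi)" "(phi - 1)*w + (3 - 2*phi) < w + (3 - 2*phi)" "w + (3 - 2*phi) < 4 - 2*phi" "4 - 2*phi < w" "w < (phi - 1)*w + (2 - phi)" "(phi - 1)*w + (2 - phi) < 1"
    using assms mulphi[OF assms(1)] mulphi[OF assms(2)] mulA[OF assms(1)] mulA[OF assms(2)] mulB[OF assms(1)] mulB[OF assms(2)] phi_bounds mulphi[OF w1(1)] mulA[OF w1(1)] mulB[OF w1(1)] by (simp_all add: algebra_simps phi_phi phi_sq div_phi)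
  show "chain [0, (phi - 1)*w + (3 - 2*phi), w + (3 - 2*phi), 4 - 2*phi, w, (phi - 1)*w + (2 - phi), 1]" using m by (simp only: chain.simps simp_thms)
  show "ivs w [0, (phi - 1)*w + (3 - 2*phi), w + (3 - 2*phi), 4 - 2*phi, w, (phi - 1)*w + (2 - phi), 1] [a1, a2, a7, a4, a6, a3]" using circ_5_0[OF assms] circ_5_1[OF assms] circ_5_2[OF assms] circ_5_3[OF assms] circ_5_4[OF assms] circ_5_5[OF assms] by (simp only: ivs.simps simp_thms) blast
  show "list_all (Qform w) [0, (phi - 1)*w + (3 - 2*phi), w + (3 - 2*phi), 4 - 2*phi, w, (phi - 1)*w + (2 - phi), 1]" using Qf_c[OF Qp_0] Qf_pw[OF Qc3] Qf_wc[OF Qc3] Qf_c[OF Qc4] Qf_w Qf_pw[OF Qc2] Qf_c[OF Qp_1] by (simp only: list.pred_inject simp_thms)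
qed simp_all

lemma circ_exists:
  assumes "0 < w" "w < 1" "w \<notin> Qp"
  shows "\<exists>cut lab. circ_ok w cut lab"
proof -
  have n: "w \<noteq> 2*phi - 3" "w \<noteq> 2 - phi" "w \<noteq> phi - 1" "w \<noteq> 4 - 2*phi"
    using assms(3) Qc2 Qc4 by (auto intro: Qp_diff Qp_mult Qp_numeral Qp_phi Qp_1)
  have b: "0 < 2*phi - 3" "2*phi - 3 < 2 - phi" "2 - phi < phi - 1" "phi - 1 < 4 - 2*phi" "4 - 2*phi < 1"
    using phi_b2 by linarith+
  consider "w < 2*phi - 3" | "2*phi - 3 < w \<and> w < 2 - phi" | "2 - phi < w \<and> w < phi - 1"
    | "phi - 1 < w \<and> w < 4 - 2*phi" | "4 - 2*phi < w"
    using n by linarith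
  thus ?thesis
  proof cases
    case 1 thus ?thesis using regime_1 assms by blast
  next
    case 2 thus ?thesis using regime_2 by blast
  next
    case 3 thus ?thesis using regime_3 by blast
  next
    case 4 thus ?thesis using regime_4 by blast
  next
    case 5 thus ?thesis using regime_5 assms by blast
  qed
qed

lemma good_lin: "good y z \<Longrightarrow> u1 \<in> Qp \<Longrightarrow> u2 \<in> Qp \<Longrightarrow> r \<in> Qp \<Longrightarrow> u1 * y + u2 * z = r \<Longrightarrow> u1 = 0 \<and> u2 = 0"
  unfolding good_def by blast

lemma Qp_of_int': "x \<in> \<int> \<Longrightarrow> x \<in> Qp" by (auto elim: Ints_cases intro: Qp_of_int)

lemma avoid:
  assumes g: "good y z" and "\<beta> \<in> Qp" "cc \<in> Qp"
  shows "frac (y + 2 * real n * (phi - 1)) \<noteq> \<beta> * frac (y + z) + cc"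
proof
  assume e: "frac (y + 2 * real n * (phi - 1)) = \<beta> * frac (y + z) + cc"
  define F1 where "F1 = real_of_int \<lfloor>y + 2 * real n * (phi - 1)\<rfloor>"
  define F2 where "F2 = real_of_int \<lfloor>y + z\<rfloor>"
  have "y + 2 * real n * (phi - 1) - F1 = \<beta> * (y + z - F2) + cc"
    using e unfolding frac_def F1_def F2_def .
  hence "(1 - \<beta>) * y + (- \<beta>) * z = cc - 2 * real n * (phi - 1) + F1 - \<beta> * F2"
    by (simp add: algebra_simps)
  moreover have "cc - 2 * real n * (phi - 1) + F1 - \<beta> * F2 \<in> Qp"
    unfolding F1_def F2_def using assms(2,3)
    by (intro Qp_add Qp_diff Qp_mult Qp_of_int Qp_numeral Qp_of_nat Qp_phi Qp_1)
  moreover have "1 - \<beta> \<in> Qp" "- \<beta> \<in> Qp" using assms(2) by (auto intro: Qp_diff Qp_1 Qp_uminus)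
  ultimately have "1 - \<beta> = 0 \<and> - \<beta> = 0" using good_lin[OF g] by blast
  thus False by linarith
qed

lemma avoid_Qform:
  assumes g: "good y z" and "Qform (frac (y + z)) x"
  shows "frac (y + 2 * real n * (phi - 1)) \<noteq> x"
  using assms(2) avoid[OF g] unfolding Qform_def by blast

lemma find_interval:
  fixes cut :: "nat \<Rightarrow> real"
  assumes mono: "\<forall>j<N. cut j < cut (Suc j)" and "cut 0 < x" "x < cut N" and ne: "\<forall>j\<le>N. x \<noteq> cut j"
  shows "\<exists>j<N. cut j < x \<and> x < cut (Suc j)"
  using assms
proof (induction N)
  case 0 thus ?case by simp
next
  case (Suc N)
  show ?case
  proof (cases "x < cut N")
    case True
    hence "\<exists>j<N. cut j < x \<and> x < cut (Suc j)" using Suc by (intro Suc.IH) auto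
    thus ?thesis by (meson less_SucI)
  next
    case False
    moreover have "x \<noteq> cut N" using Suc.prems(4) by simp
    ultimately have "cut N < x" by linarith
    thus ?thesis using Suc.prems(3) by blast
  qed
qed

lemma cut_range:
  fixes cut :: "nat \<Rightarrow> real"
  assumes "\<forall>j<N. cut j < cut (Suc j)" "i \<le> j" "j \<le> N"
  shows "cut i \<le> cut j"
  using assms(2,3)
proof (induction j rule: dec_induct)
  case base thus ?case by simp
next
  case (step j) thus ?case using assms(1) by (metis Suc_le_lessD order.trans less_imp_le)
qed

lemma rot_iter: "0 \<le> y \<Longrightarrow> y < 1 \<Longrightarrow> (rot ^^ n) y = frac (y + 2 * real n * (phi - 1))"
proof (induction n)
  case 0 thus ?case by (simp add: frac_eq)
next
  case (Suc n)
  have ih: "(rot ^^ n) y = frac (y + 2 * real n * (phi - 1))" using Suc by simp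
  have "(rot ^^ Suc n) y = rot ((rot ^^ n) y)" by simp
  also have "\<dots> = frac (frac (y + 2 * real n * (phi - 1)) + 2 / phi)"
    unfolding ih rot_def ..
  also have "2 / phi = 2 * (1 / phi)" by simp
  also have "\<dots> = 2 * (phi - 1)" unfolding inv_phi ..
  also have "frac (frac (y + 2 * real n * (phi - 1)) + 2 * (phi - 1)) = frac (y + 2 * real n * (phi - 1) + 2 * (phi - 1))"
    by (rule frac_add_simps(1))
  also have "y + 2 * real n * (phi - 1) + 2 * (phi - 1) = y + 2 * real (Suc n) * (phi - 1)"
    by (simp add: algebra_simps)
  finally show ?case .
qed

lemma good_adm: assumes g: "good y z" shows "admissible theta0 (0, y, z)"
  unfolding admissible_def
proof (intro allI impI notI)
  fix t l1 l2 assume ne: "(l1::abc) \<noteq> l2" and h: "hit theta0 (0, y, z) l1 t \<and> hit theta0 (0, y, z) l2 t"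
  have g1: False if A: "y + t*(phi-1) \<in> \<int>" "t/2 \<in> \<int>"
  proof -
    obtain m where m: "y + t*(phi-1) = of_int m" using A(1) by (auto elim: Ints_cases)
    obtain k where k: "t/2 = of_int k" using A(2) by (auto elim: Ints_cases)
    from m k have eq: "1 * y + 0 * z = of_int m - 2 * of_int k * (phi - 1)" by (simp add: algebra_simps)
    have q: "of_int m - 2 * of_int k * (phi - 1) \<in> Qp"
      by (intro Qp_diff Qp_mult Qp_of_int Qp_numeral Qp_phi Qp_1)
    from good_lin[OF g Qp_1 Qp_0 q eq] show False by simp
  qed
  have g2: False if A: "z + t*(2-phi) \<in> \<int>" "t/2 \<in> \<int>"
  proof -
    obtain m where m: "z + t*(2-phi) = of_int m" using A(1) by (auto elim: Ints_cases)
    obtain k where k: "t/2 = of_int k" using A(2) by (auto elim: Ints_cases)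
    from m k have eq: "0 * y + 1 * z = of_int m - 2 * of_int k * (2 - phi)" by (simp add: algebra_simps)
    have q: "of_int m - 2 * of_int k * (2 - phi) \<in> Qp"
      by (intro Qp_diff Qp_mult Qp_of_int Qp_numeral Qp_phi)
    from good_lin[OF g Qp_0 Qp_1 q eq] show False by simp
  qed
  have g3: False if A: "y + t*(phi-1) \<in> \<int>" "z + t*(2-phi) \<in> \<int>"
  proof -
    obtain m1 where e1: "y + t*(phi-1) = of_int m1" using A(1) by (auto elim: Ints_cases)
    obtain m2 where e2: "z + t*(2-phi) = of_int m2" using A(2) by (auto elim: Ints_cases)
    note e = e1 e2
    have pp: "(phi - 1) * (phi - 1) = 2 - phi" using phi_sq by (simp add: algebra_simps)
    have "(phi - 1) * (y + t*(phi-1)) = (phi - 1) * y + t * ((phi - 1) * (phi - 1))" by (simp add: algebra_simps)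
    hence "(phi - 1) * of_int m1 = (phi - 1) * y + t * (2 - phi)" unfolding pp e(1) .
    hence eq: "(- (phi - 1)) * y + 1 * z = of_int m2 - (phi - 1) * of_int m1" using e(2) by (simp add: algebra_simps)
    have q: "of_int m2 - (phi - 1) * of_int m1 \<in> Qp"
      by (intro Qp_diff Qp_mult Qp_of_int Qp_phi Qp_1)
    have q2: "- (phi - 1) \<in> Qp" by (intro Qp_uminus Qp_diff Qp_phi Qp_1)
    from good_lin[OF g q2 Qp_1 q eq] show False by simp
  qed
  show False using h ne g1 g2 g3 unfolding hit_m by (cases l1; cases l2) auto
qed

lemma main_lemma:
  assumes g: "good y z" and y: "0 \<le> y" "y \<le> 1"
  shows "admissible theta0 (0, y, z) \<and>
      (\<exists>cut :: nat \<Rightarrow> real. \<exists>lab :: nat \<Rightarrow> alph7.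
         cut 0 = 0 \<and> cut 6 = 1 \<and> (\<forall>j<6. cut j < cut (Suc j)) \<and>
         (\<forall>j<6. \<forall>s\<in>{cut j<..<cut (Suc j)}. circ_pt y z s \<in> P (lab j)) \<and>
         (\<forall>j<5. lab j \<noteq> lab (Suc j)) \<and>
         (\<exists>v :: nat \<Rightarrow> alph7.
            (\<forall>n. \<exists>j<6. (rot ^^ n) y \<in> {cut j<..<cut (Suc j)} \<and> v n = lab j) \<and>
            billiard theta0 (0, y, z) = Phi_inf v))"
proof -
  have "y \<noteq> 1"
  proof
    assume "y = 1"
    hence "1 * y + 0 * z = 1" by simp
    thus False using good_lin[OF g Qp_1 Qp_0 Qp_1] by simp
  qed
  hence y01: "0 \<le> y" "y < 1" using y by auto
  define w where "w = frac (y + z)"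
  have wQ: "w \<notin> Qp"
  proof
    assume "w \<in> Qp"
    hence "w + of_int \<lfloor>y+z\<rfloor> \<in> Qp" by (intro Qp_add Qp_of_int)
    moreover have "1*y + 1*z = w + of_int \<lfloor>y+z\<rfloor>" unfolding w_def frac_def by simp
    ultimately show False using good_lin[OF g Qp_1 Qp_1] by auto
  qed
  have "w \<noteq> 0" using wQ Qp_0 by auto
  hence w0: "0 < w" "w < 1" unfolding w_def using frac_ge_0[of "y+z"] frac_lt_1[of "y+z"] by linarith+
  obtain cut lab where co: "circ_ok w cut lab" using circ_exists[OF w0 wQ] by blast
  from co have c0: "cut 0 = 0" and c6: "cut 6 = 1" and cm: "\<forall>j<6. cut j < cut (Suc j)"
    and ci: "\<forall>j<6. \<forall>s. cut j < s \<longrightarrow> s < cut (Suc j) \<longrightarrow> (s, frac (w - s)) \<in> P (lab j)"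
    and cl: "\<forall>j<5. lab j \<noteq> lab (Suc j)" and cq: "\<forall>j\<le>6. Qform w (cut j)"
    unfolding circ_ok_def by blast+
  have crange: "0 \<le> cut j \<and> cut j \<le> 1" if "j \<le> 6" for j
    using cut_range[OF cm, of 0 j] cut_range[OF cm, of j 6] that c0 c6 by simp
  have circ: "circ_pt y z s \<in> P (lab j)" if "j < 6" "s \<in> {cut j<..<cut (Suc j)}" for j s
  proof -
    have s: "cut j < s" "s < cut (Suc j)" using that by auto
    have "0 < s" "s < 1" using crange[of j] crange[of "Suc j"] s that by auto
    hence "frac s = s" by (simp add: frac_eq)
    moreover have "frac (y + z - s) = frac (w - s)"
    proof -
      have e: "y + z - s = (w - s) + of_int \<lfloor>y + z\<rfloor>" unfolding w_def frac_def by simp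
      show ?thesis unfolding e by (rule frac_add_of_int_right)
    qed
    ultimately show ?thesis unfolding circ_pt_def using ci that s by simp
  qed
  define Yn where "Yn n = frac (y + 2 * real n * (phi - 1))" for n
  have rotY: "(rot ^^ n) y = Yn n" for n unfolding Yn_def by (rule rot_iter[OF y01])
  have ne: "Yn n \<noteq> cut j" if "j \<le> 6" for j n
    unfolding Yn_def using avoid_Qform[OF g] cq that unfolding w_def by blast
  have Yint: "\<exists>j<6. cut j < Yn n \<and> Yn n < cut (Suc j)" for n
  proof (rule find_interval[OF cm])
    show "\<forall>j\<le>6. Yn n \<noteq> cut j" using ne by blast
    have "Yn n \<noteq> 0" using ne[of 0 n] c0 by simp
    moreover have "0 \<le> Yn n" unfolding Yn_def by simp
    ultimately show "cut 0 < Yn n" using c0 by simp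
    show "Yn n < cut 6" using c6 unfolding Yn_def by (simp add: frac_lt_1)
  qed
  define J where "J n = (SOME j. j < 6 \<and> cut j < Yn n \<and> Yn n < cut (Suc j))" for n
  have J: "J n < 6 \<and> cut (J n) < Yn n \<and> Yn n < cut (Suc (J n))" for n
    using someI_ex[OF Yint[of n]] unfolding J_def by blast
  define v where "v n = lab (J n)" for n
  define Zn where "Zn n = frac (w - Yn n)" for n
  have PZ: "(Yn n, Zn n) \<in> P (v n)" for n using ci J[of n] unfolding v_def Zn_def by blast
  have Y0: "0 < Yn n" "Yn n < 1" for n
  proof -
    have "0 \<le> cut (J n)" using crange[of "J n"] J[of n] by simp
    thus "0 < Yn n" using J[of n] by simp
    show "Yn n < 1" unfolding Yn_def by (simp add: frac_lt_1)
  qed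
  have Z0: "0 < Zn n" "Zn n < 1" for n
  proof -
    have "Zn n \<noteq> 0"
    proof
      assume "Zn n = 0"
      hence "w - Yn n \<in> \<int>" unfolding Zn_def by simp
      then obtain m where "w - Yn n = of_int m" by (auto elim: Ints_cases)
      hence "Yn n = 1 * w + (- of_int m)" by simp
      moreover have "Qform w (1 * w + (- of_int m))" unfolding Qform_def
        by (intro exI[of _ 1] exI[of _ "- of_int m"]) (simp add: Qp_1 Qp_uminus Qp_of_int)
      ultimately show False using avoid_Qform[OF g, of _ n] unfolding Yn_def w_def by metis
    qed
    moreover have "0 \<le> Zn n" "Zn n < 1" unfolding Zn_def by (simp_all add: frac_lt_1)
    ultimately show "0 < Zn n" "Zn n < 1" by simp_all
  qed
  have KY: "y + (2 * real n) * (phi - 1) - Yn n = of_int \<lfloor>y + 2 * real n * (phi - 1)\<rfloor>" for n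
    unfolding Yn_def frac_def by simp
  have KZ: "z + (2 * real n) * (2 - phi) - Zn n =
      of_int (2 * int n + \<lfloor>y + z\<rfloor> - \<lfloor>y + 2 * real n * (phi - 1)\<rfloor> + \<lfloor>w - Yn n\<rfloor>)" for n
  proof -
    have e1: "Zn n = w - Yn n - of_int \<lfloor>w - Yn n\<rfloor>" unfolding Zn_def frac_def ..
    have e2: "w = y + z - of_int \<lfloor>y + z\<rfloor>" unfolding w_def frac_def ..
    have e3: "Yn n = y + 2 * real n * (phi - 1) - of_int \<lfloor>y + 2 * real n * (phi - 1)\<rfloor>" unfolding Yn_def frac_def ..
    show ?thesis unfolding e1 e2 e3 by (simp add: algebra_simps)
  qed
  have adm: "admissible theta0 (0, y, z)" by (rule good_adm[OF g])
  have bil: "billiard theta0 (0, y, z) = Phi_inf v"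
  proof (rule billiard_blocks[where B = "\<lambda>k. blk (v k) (2 * real k) (Yn k) (Zn k)"])
    show "l1 = l2" if "hit theta0 (0, y, z) l1 t" "hit theta0 (0, y, z) l2 t" for t l1 l2
      using adm that unfolding admissible_def by blast
    note bo = blk_ok[OF refl KY KZ Y0 Z0 PZ]
    show "sorted_wrt (<) (map fst (blk (v k) (2 * real k) (Yn k) (Zn k)))" for k by (rule bo(1))
    show "2 * real k \<le> fst p \<and> fst p < 2 * real k + 2 \<and> hit theta0 (0, y, z) (snd p) (fst p)"
      if "p \<in> set (blk (v k) (2 * real k) (Yn k) (Zn k))" for k p using bo(2)[OF that] .
    show "t \<in> fst ` set (blk (v k) (2 * real k) (Yn k) (Zn k))"
      if "2 * real k \<le> t" "t < 2 * real k + 2" "hit theta0 (0, y, z) l t" for k t l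
      using bo(3)[OF that] .
    show "map snd (blk (v k) (2 * real k) (Yn k) (Zn k)) = Phi (v k)" for k by (rule bo(4))
  qed
  have vprop: "\<forall>n. \<exists>j<6. (rot ^^ n) y \<in> {cut j<..<cut (Suc j)} \<and> v n = lab j"
    unfolding rotY v_def using J by auto
  show ?thesis using adm c0 c6 cm circ cl vprop bil by blast
qed

theorem theorem1:
  shows "AE p in lborel. p \<in> {0..1::real} \<times> {0..1::real} \<longrightarrow>
    (let y = fst p; z = snd p; m = (0::real, y, z) in
      admissible theta0 m \<and>
      (\<exists>cut :: nat \<Rightarrow> real. \<exists>lab :: nat \<Rightarrow> alph7.
         cut 0 = 0 \<and> cut 6 = 1 \<and> (\<forall>j<6. cut j < cut (Suc j)) \<and>
         (\<forall>j<6. \<forall>s\<in>{cut j<..<cut (Suc j)}. circ_pt y z s \<in> P (lab j)) \<and>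
         (\<forall>j<5. lab j \<noteq> lab (Suc j)) \<and>
         (\<exists>v :: nat \<Rightarrow> alph7.
            (\<forall>n. \<exists>j<6. (rot ^^ n) y \<in> {cut j<..<cut (Suc j)} \<and> v n = lab j) \<and>
            billiard theta0 m = Phi_inf v)))"
  using AE_good
proof (rule eventually_mono)
  fix p :: "real \<times> real"
  assume g: "good (fst p) (snd p)"
  show "p \<in> {0..1::real} \<times> {0..1::real} \<longrightarrow>
    (let y = fst p; z = snd p; m = (0::real, y, z) in
      admissible theta0 m \<and>
      (\<exists>cut :: nat \<Rightarrow> real. \<exists>lab :: nat \<Rightarrow> alph7.
         cut 0 = 0 \<and> cut 6 = 1 \<and> (\<forall>j<6. cut j < cut (Suc j)) \<and>
         (\<forall>j<6. \<forall>s\<in>{cut j<..<cut (Suc j)}. circ_pt y z s \<in> P (lab j)) \<and>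
         (\<forall>j<5. lab j \<noteq> lab (Suc j)) \<and>
         (\<exists>v :: nat \<Rightarrow> alph7.
            (\<forall>n. \<exists>j<6. (rot ^^ n) y \<in> {cut j<..<cut (Suc j)} \<and> v n = lab j) \<and>
            billiard theta0 m = Phi_inf v)))"
  proof
    assume "p \<in> {0..1::real} \<times> {0..1::real}"
    hence "0 \<le> fst p" "fst p \<le> 1" by (auto simp: mem_Times_iff)
    from main_lemma[OF g this] show "let y = fst p; z = snd p; m = (0::real, y, z) in
      admissible theta0 m \<and>
      (\<exists>cut :: nat \<Rightarrow> real. \<exists>lab :: nat \<Rightarrow> alph7.
         cut 0 = 0 \<and> cut 6 = 1 \<and> (\<forall>j<6. cut j < cut (Suc j)) \<and>
         (\<forall>j<6. \<forall>s\<in>{cut j<..<cut (Suc j)}. circ_pt y z s \<in> P (lab j)) \<and>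
         (\<forall>j<5. lab j \<noteq> lab (Suc j)) \<and>
         (\<exists>v :: nat \<Rightarrow> alph7.
            (\<forall>n. \<exists>j<6. (rot ^^ n) y \<in> {cut j<..<cut (Suc j)} \<and> v n = lab j) \<and>
            billiard theta0 m = Phi_inf v))" by (simp add: Let_def)
  qed
qed

end
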